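(* Let $P$ be a rectangle with horizontal sides of length $w$ and vertical sides of length $1$ (aspect ratio $w$). Its two ping-pong cylinders are $\lambda$-stable. These are the only $\lambda$-stable periodic cylinders unless $$w=\frac{p}{q}\cot\left(\frac{\pi p}{2(p+q)}\right)$$ for some positive integers $p,q$. When $w$ satisfies this equation, there are, in addition to the ping-pong cylinders, at most two more $\lambda$-stable periodic cylinders, and their slopes are $\pm p/(qw)$.
   Context: For a polygon $P$, let $\Phi$ be its billiard map (collision to collision, specular reflection), in coordinates $(s,\theta)$ with $s$ arc length on $\partial P$ and $\theta\in(-\pi/2,\pi/2)$ the angle from the inward normal. For $\lambda>0$ let $R_\lambda(s,\theta)=(s,\lambda\theta)$ and $\Phi_\lambda:=R_\lambda\circ\Phi$. A periodic cylinder is a maximal one-parameter family of parallel periodic orbits of $\Phi$ with the same itinerary (sequence of sides hit). A ping-pong cylinder consists of orbits bouncing perpendicularly between two parallel sides. A periodic orbit $q$ of $\Phi$ is $\lambda^{+}$-stable (resp. $\lambda^-$-stable) if there exist a strictly decreasing (resp. strictly increasing) sequence $\lambda_n\to1$ and periodic orbits $q_n$ of $\Phi_{\lambda_n}$ with the same itinerary as $q$ such that $q_n\to q$. A periodic cylinder is $\lambda$-stable if it contains a $\lambda^+$-stable periodic orbit and a $\lambda^-$-stable periodic orbit. The slope of a cylinder is the slope of the (unfolded) straight lines of its trajectories. *)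

theory Defs
  imports Complex_Main
begin

text \<open>The boundary is parametrised by arc length
 s in [0, 2w+2), counterclockwise starting at the corner (0,0):
 side 0 = bottom (s in (0,w)), side 1 = right (s in (w,w+1)),
 side 2 = top (s in (w+1,2w+1)), side 3 = left (s in (2w+1,2w+2)).
 Corners (s in {0,w,w+1,2w+1}) are excluded from the phase space.\<close>

definition side_of :: "real \<Rightarrow> real \<Rightarrow> nat" where
  "side_of w s = (if s < w then 0 else if s < w + 1 then 1 else if s < 2*w + 1 then 2 else 3)"

definition bpt :: "real \<Rightarrow> real \<Rightarrow> real \<times> real" where
  "bpt w s = (if s \<le> w then (s, 0) else if s \<le> w + 1 then (w, s - w)
              else if s \<le> 2*w + 1 then (2*w + 1 - s, 1) else (0, 2*w + 2 - s))"

definition nrm :: "nat \<Rightarrow> real \<times> real" where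
  "nrm i = (if i = 0 then (0, 1) else if i = 1 then (-1, 0) else if i = 2 then (0, -1) else (1, 0))"

definition is_corner_s :: "real \<Rightarrow> real \<Rightarrow> bool" where
  "is_corner_s w s \<longleftrightarrow> s \<in> {0, w, w + 1, 2*w + 1}"

definition is_corner_pt :: "real \<Rightarrow> real \<times> real \<Rightarrow> bool" where
  "is_corner_pt w p \<longleftrightarrow> fst p \<in> {0, w} \<and> snd p \<in> {0, 1}"

definition arclen :: "real \<Rightarrow> real \<times> real \<Rightarrow> real" where
  "arclen w p = (let x = fst p; y = snd p in
     if y = 0 then x else if x = w then w + y else if y = 1 then 2*w + 1 - x else 2*w + 2 - y)"

definition rot :: "real \<Rightarrow> real \<times> real \<Rightarrow> real \<times> real" where
  "rot th v = (fst v * cos th - snd v * sin th, fst v * sin th + snd v * cos th)"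

definition exit_time :: "real \<Rightarrow> real \<times> real \<Rightarrow> real \<times> real \<Rightarrow> real" where
  "exit_time w p d =
    (let tx = (if fst d > 0 then (w - fst p) / fst d else - fst p / fst d);
         ty = (if snd d > 0 then (1 - snd p) / snd d else - snd p / snd d)
     in if fst d = 0 then ty else if snd d = 0 then tx else min tx ty)"

text \<open>Outgoing direction of the phase point (s, theta): theta is the angle from the inward normal.\<close>
definition dir :: "real \<Rightarrow> real \<times> real \<Rightarrow> real \<times> real" where
  "dir w x = rot (snd x) (nrm (side_of w (fst x)))"

definition hit_pt :: "real \<Rightarrow> real \<times> real \<Rightarrow> real \<times> real" where
  "hit_pt w x = (let p = bpt w (fst x); d = dir w x; t = exit_time w p d
                 in (fst p + t * fst d, snd p + t * snd d))"

definition billiard :: "real \<Rightarrow> real \<times> real \<Rightarrow> real \<times> real" where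
  "billiard w x = (let d = dir w x; q = hit_pt w x; s' = arclen w q; n' = nrm (side_of w s');
                       dn = fst d * fst n' + snd d * snd n';
                       d' = (fst d - 2 * dn * fst n', snd d - 2 * dn * snd n')
                   in (s', arcsin (fst n' * snd d' - snd n' * fst d')))"

definition R_lam :: "real \<Rightarrow> real \<times> real \<Rightarrow> real \<times> real" where
  "R_lam lam x = (fst x, lam * snd x)"

definition billiard_lam :: "real \<Rightarrow> real \<Rightarrow> real \<times> real \<Rightarrow> real \<times> real" where
  "billiard_lam w lam = R_lam lam \<circ> billiard w"

definition phase :: "real \<Rightarrow> (real \<times> real) set" where
  "phase w = {x. 0 \<le> fst x \<and> fst x < 2*w + 2 \<and> \<not> is_corner_s w (fst x) \<and> \<bar>snd x\<bar> < pi / 2}"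

definition regular :: "real \<Rightarrow> real \<times> real \<Rightarrow> bool" where
  "regular w x \<longleftrightarrow> x \<in> phase w \<and> \<not> is_corner_pt w (hit_pt w x)"

definition periodic_pt :: "real \<Rightarrow> (real \<times> real \<Rightarrow> real \<times> real) \<Rightarrow> real \<times> real \<Rightarrow> bool" where
  "periodic_pt w f x \<longleftrightarrow> (\<forall>n. regular w ((f ^^ n) x)) \<and> (\<exists>n>0. (f ^^ n) x = x)"

definition itin :: "real \<Rightarrow> (real \<times> real \<Rightarrow> real \<times> real) \<Rightarrow> real \<times> real \<Rightarrow> nat \<Rightarrow> nat" where
  "itin w f x = (\<lambda>n. side_of w (fst ((f ^^ n) x)))"

definition cyl :: "real \<Rightarrow> real \<times> real \<Rightarrow> (real \<times> real) set" where
  "cyl w q = {x. periodic_pt w (billiard w) x \<and>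
                 (\<exists>k. itin w (billiard w) x = itin w (billiard w) ((billiard w ^^ k) q))}"

definition is_cyl :: "real \<Rightarrow> (real \<times> real) set \<Rightarrow> bool" where
  "is_cyl w C \<longleftrightarrow> (\<exists>q. periodic_pt w (billiard w) q \<and> C = cyl w q)"

definition is_pingpong_cyl :: "real \<Rightarrow> (real \<times> real) set \<Rightarrow> bool" where
  "is_pingpong_cyl w C \<longleftrightarrow> (\<exists>q. periodic_pt w (billiard w) q \<and> snd q = 0 \<and> C = cyl w q)"

definition lam_plus_stable :: "real \<Rightarrow> real \<times> real \<Rightarrow> bool" where
  "lam_plus_stable w q \<longleftrightarrow> periodic_pt w (billiard w) q \<and>
     (\<exists>lam :: nat \<Rightarrow> real. \<exists>y :: nat \<Rightarrow> real \<times> real.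
        (\<forall>n. lam (Suc n) < lam n) \<and> lam \<longlonglongrightarrow> 1 \<and>
        (\<forall>n. periodic_pt w (billiard_lam w (lam n)) (y n) \<and>
             itin w (billiard_lam w (lam n)) (y n) = itin w (billiard w) q) \<and>
        y \<longlonglongrightarrow> q)"

definition lam_minus_stable :: "real \<Rightarrow> real \<times> real \<Rightarrow> bool" where
  "lam_minus_stable w q \<longleftrightarrow> periodic_pt w (billiard w) q \<and>
     (\<exists>lam :: nat \<Rightarrow> real. \<exists>y :: nat \<Rightarrow> real \<times> real.
        (\<forall>n. lam n < lam (Suc n)) \<and> lam \<longlonglongrightarrow> 1 \<and>
        (\<forall>n. lam n > 0) \<and>
        (\<forall>n. periodic_pt w (billiard_lam w (lam n)) (y n) \<and>
             itin w (billiard_lam w (lam n)) (y n) = itin w (billiard w) q) \<and>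
        y \<longlonglongrightarrow> q)"

definition lam_stable_cyl :: "real \<Rightarrow> (real \<times> real) set \<Rightarrow> bool" where
  "lam_stable_cyl w C \<longleftrightarrow> is_cyl w C \<and> (\<exists>q\<in>C. lam_plus_stable w q) \<and> (\<exists>q\<in>C. lam_minus_stable w q)"

definition slope :: "real \<Rightarrow> real \<times> real \<Rightarrow> real" where
  "slope w x = snd (dir w x) / fst (dir w x)"

end

theory Submission
  imports Defs
begin


lemma side_of_cases: "side_of w s \<in> {0,1,2,3}"
  unfolding side_of_def by auto

lemma phase_side:
  assumes "w > 0" "z \<in> phase w"
  shows "(side_of w (fst z) = 0 \<and> 0 < fst z \<and> fst z < w \<and> bpt w (fst z) = (fst z, 0))
       \<or> (side_of w (fst z) = 1 \<and> w < fst z \<and> fst z < w + 1 \<and> bpt w (fst z) = (w, fst z - w))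
       \<or> (side_of w (fst z) = 2 \<and> w + 1 < fst z \<and> fst z < 2*w+1 \<and> bpt w (fst z) = (2*w+1 - fst z, 1))
       \<or> (side_of w (fst z) = 3 \<and> 2*w+1 < fst z \<and> fst z < 2*w+2 \<and> bpt w (fst z) = (0, 2*w+2 - fst z))"
  using assms unfolding phase_def is_corner_s_def side_of_def bpt_def
  by (auto simp: not_less)

lemma dir_side:
  "dir w z = (let t = snd z in
     if side_of w (fst z) = 0 then (- sin t, cos t)
     else if side_of w (fst z) = 1 then (- cos t, - sin t)
     else if side_of w (fst z) = 2 then (sin t, - cos t) else (cos t, sin t))"
  unfolding dir_def rot_def nrm_def using side_of_cases[of w "fst z"] by (auto simp: Let_def)

lemma cos_pos_phase: "z \<in> phase w \<Longrightarrow> cos (snd z) > 0"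
  unfolding phase_def by (intro cos_gt_zero_pi) auto

lemma dir_unit: "(fst (dir w z))^2 + (snd (dir w z))^2 = 1"
  unfolding dir_side Let_def by (auto simp: power2_eq_square algebra_simps)

definition xiP :: "real \<Rightarrow> real \<times> real \<Rightarrow> real \<times> real \<Rightarrow> real" where
  "xiP w P d = (if fst d > 0 then (w - fst P) / fst d else - fst P / fst d)"
definition etaP :: "real \<times> real \<Rightarrow> real \<times> real \<Rightarrow> real" where
  "etaP P d = (if snd d > 0 then (1 - snd P) / snd d else - snd P / snd d)"

definition inw :: "real \<Rightarrow> real \<times> real \<Rightarrow> real \<times> real \<Rightarrow> bool" where
  "inw w P d \<longleftrightarrow> 0 \<le> fst P \<and> fst P \<le> w \<and> 0 \<le> snd P \<and> snd P \<le> 1 \<and>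
     (fst P = w \<longrightarrow> fst d < 0) \<and> (fst P = 0 \<longrightarrow> fst d > 0) \<and>
     (snd P = 1 \<longrightarrow> snd d < 0) \<and> (snd P = 0 \<longrightarrow> snd d > 0) \<and> fst d \<noteq> 0 \<and> snd d \<noteq> 0"

lemma inw_phase:
  assumes "w > 0" "z \<in> phase w" "fst (dir w z) \<noteq> 0" "snd (dir w z) \<noteq> 0"
  shows "inw w (bpt w (fst z)) (dir w z)"
proof -
  have c: "cos (snd z) > 0" using cos_pos_phase[OF assms(2)] .
  show ?thesis
    using phase_side[OF assms(1,2)] assms(1,3,4) c unfolding inw_def dir_side Let_def
    by (elim disjE) auto
qed

lemma xiP_bounds:
  assumes "inw w P d" shows "0 < xiP w P d" "xiP w P d \<le> w / \<bar>fst d\<bar>"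
  using assms unfolding inw_def xiP_def
  by (auto simp: divide_simps split: if_splits)

lemma etaP_bounds:
  assumes "inw w P d" shows "0 < etaP P d" "etaP P d \<le> 1 / \<bar>snd d\<bar>"
  using assms unfolding inw_def etaP_def
  by (auto simp: divide_simps split: if_splits)

lemma exit_time_eq:
  assumes "fst d \<noteq> 0" "snd d \<noteq> 0"
  shows "exit_time w P d = min (xiP w P d) (etaP P d)"
  using assms unfolding exit_time_def xiP_def etaP_def Let_def by auto


definition xi :: "real \<Rightarrow> real \<times> real \<Rightarrow> real" where
  "xi w z = xiP w (bpt w (fst z)) (dir w z)"
definition eta :: "real \<Rightarrow> real \<times> real \<Rightarrow> real" where
  "eta w z = etaP (bpt w (fst z)) (dir w z)"

lemma billiard_eq:
  assumes "fst (dir w z) \<noteq> 0" "snd (dir w z) \<noteq> 0"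
  shows "billiard w z = (let d = dir w z; t = min (xi w z) (eta w z);
            Q = (fst (bpt w (fst z)) + t * fst d, snd (bpt w (fst z)) + t * snd d);
            n' = nrm (side_of w (arclen w Q))
         in (arclen w Q, arcsin (fst n' * snd d - snd n' * fst d)))"
  using assms unfolding billiard_def hit_pt_def Let_def xi_def eta_def
  by (simp add: exit_time_eq algebra_simps)

lemma hit_V:
  assumes "inw w P d" "xiP w P d < etaP P d"
  shows "fst P + xiP w P d * fst d = (if fst d > 0 then w else 0)"
    "0 < snd P + xiP w P d * snd d" "snd P + xiP w P d * snd d < 1"
    "etaP (fst P + xiP w P d * fst d, snd P + xiP w P d * snd d) (- fst d, snd d) = etaP P d - xiP w P d"
proof -
  define t where "t = xiP w P d"
  have x: "t > 0" using xiP_bounds[OF assms(1)] t_def by simp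
  have lt: "t < etaP P d" using assms(2) t_def by simp
  have I: "0 \<le> snd P" "snd P \<le> 1" "snd d \<noteq> 0" "fst d \<noteq> 0" using assms(1) unfolding inw_def by auto
  show "fst P + xiP w P d * fst d = (if fst d > 0 then w else 0)"
    using I(4) unfolding xiP_def by (auto simp: field_simps)
  show "0 < snd P + xiP w P d * snd d"
  proof (cases "snd d > 0")
    case True then show ?thesis using x I t_def by (smt (verit) mult_pos_pos)
  next
    case False
    then have "snd d < 0" using I by simp
    then have "t < - snd P / snd d" using lt unfolding etaP_def by simp
    then have "t * snd d > - snd P" using \<open>snd d < 0\<close> by (simp add: field_simps)
    then show ?thesis using t_def by simp
  qed
  show "snd P + xiP w P d * snd d < 1"
  proof (cases "snd d > 0")
    case True
    then have "t < (1 - snd P) / snd d" using lt unfolding etaP_def by simp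
    then have "t * snd d < 1 - snd P" using True by (simp add: field_simps)
    then show ?thesis using t_def by simp
  next
    case False
    then have "snd d < 0" using I by simp
    then have "t * snd d < 0" using x by (simp add: mult_pos_neg)
    then show ?thesis using I t_def by simp
  qed
  show "etaP (fst P + xiP w P d * fst d, snd P + xiP w P d * snd d) (- fst d, snd d) = etaP P d - xiP w P d"
    using I(3) unfolding etaP_def by (auto simp: field_simps)
qed

lemma hit_H:
  assumes "inw w P d" "etaP P d < xiP w P d"
  shows "snd P + etaP P d * snd d = (if snd d > 0 then 1 else 0)"
    "0 < fst P + etaP P d * fst d" "fst P + etaP P d * fst d < w"
    "xiP w (fst P + etaP P d * fst d, snd P + etaP P d * snd d) (fst d, - snd d) = xiP w P d - etaP P d"
proof -
  define t where "t = etaP P d"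
  have x: "t > 0" using etaP_bounds[OF assms(1)] t_def by simp
  have lt: "t < xiP w P d" using assms(2) t_def by simp
  have I: "0 \<le> fst P" "fst P \<le> w" "snd d \<noteq> 0" "fst d \<noteq> 0" using assms(1) unfolding inw_def by auto
  show "snd P + etaP P d * snd d = (if snd d > 0 then 1 else 0)"
    using I(3) unfolding etaP_def by (auto simp: field_simps)
  show "0 < fst P + etaP P d * fst d"
  proof (cases "fst d > 0")
    case True then show ?thesis using x I t_def by (smt (verit) mult_pos_pos)
  next
    case False
    then have "fst d < 0" using I by simp
    then have "t < - fst P / fst d" using lt unfolding xiP_def by simp
    then have "t * fst d > - fst P" using \<open>fst d < 0\<close> by (simp add: field_simps)
    then show ?thesis using t_def by simp
  qed
  show "fst P + etaP P d * fst d < w"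
  proof (cases "fst d > 0")
    case True
    then have "t < (w - fst P) / fst d" using lt unfolding xiP_def by simp
    then have "t * fst d < w - fst P" using True by (simp add: field_simps)
    then show ?thesis using t_def by simp
  next
    case False
    then have "fst d < 0" using I by simp
    then have "t * fst d < 0" using x by (simp add: mult_pos_neg)
    then show ?thesis using I t_def by simp
  qed
  show "xiP w (fst P + etaP P d * fst d, snd P + etaP P d * snd d) (fst d, - snd d) = xiP w P d - etaP P d"
    using I(4) unfolding xiP_def by (auto simp: field_simps)
qed


lemma arcsin_facts:
  assumes "\<bar>v\<bar> < 1"
  shows "sin (arcsin v) = v" "cos (arcsin v) = sqrt (1 - v^2)" "\<bar>arcsin v\<bar> < pi/2"
proof -
  show "sin (arcsin v) = v" using assms by (simp add: sin_arcsin)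
  show "cos (arcsin v) = sqrt (1 - v^2)" using assms by (simp add: cos_arcsin)
  have "-(pi/2) < arcsin v" "arcsin v < pi/2" using assms arcsin_lt_bounded[of v] by auto
  then show "\<bar>arcsin v\<bar> < pi/2" by auto
qed

lemma sqrt_other: "(a::real)^2 + b^2 = 1 \<Longrightarrow> sqrt (1 - b^2) = \<bar>a\<bar>"
  by (metis add_diff_cancel_right' real_sqrt_abs)

lemma abs_lt1: "(a::real)^2 + b^2 = 1 \<Longrightarrow> a \<noteq> 0 \<Longrightarrow> \<bar>b\<bar> < 1"
proof -
  assume h: "a^2 + b^2 = 1" "a \<noteq> 0"
  then have "b^2 < 1" using zero_less_power2[of a] by linarith
  then show ?thesis by (simp add: abs_square_less_1)
qed

lemma step_V:
  assumes w: "w > 0" and z: "z \<in> phase w" and dx: "fst (dir w z) \<noteq> 0" and dy: "snd (dir w z) \<noteq> 0"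
    and lt: "xi w z < eta w z"
  shows "billiard w z \<in> phase w \<and> dir w (billiard w z) = (- fst (dir w z), snd (dir w z))
     \<and> xi w (billiard w z) = w / \<bar>fst (dir w z)\<bar> \<and> eta w (billiard w z) = eta w z - xi w z
     \<and> side_of w (fst (billiard w z)) = (if fst (dir w z) > 0 then 1 else 3)"
proof -
  define d where "d = dir w z"
  define P where "P = bpt w (fst z)"
  have I: "inw w P d" using inw_phase[OF w z dx dy] d_def P_def by simp
  have lt': "xiP w P d < etaP P d" using lt unfolding xi_def eta_def d_def P_def .
  define y where "y = snd P + xiP w P d * snd d"
  note H = hit_V[OF I lt']
  have y01: "0 < y" "y < 1" using H y_def by auto
  have u: "(fst d)^2 + (snd d)^2 = 1" using dir_unit d_def by simp
  have dy1: "\<bar>snd d\<bar> < 1" using abs_lt1[OF u] dx d_def by simp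
  have B: "billiard w z = (arclen w (fst P + xiP w P d * fst d, y),
     arcsin (fst (nrm (side_of w (arclen w (fst P + xiP w P d * fst d, y)))) * snd d
       - snd (nrm (side_of w (arclen w (fst P + xiP w P d * fst d, y)))) * fst d))"
    using billiard_eq[OF dx dy] lt unfolding Let_def d_def P_def y_def xi_def eta_def by simp
  show ?thesis
  proof (cases "fst d > 0")
    case True
    have Q: "fst P + xiP w P d * fst d = w" using H(1) True by simp
    have al: "arclen w (w, y) = w + y" using y01 unfolding arclen_def by simp
    have sd: "side_of w (w + y) = 1" using y01 w unfolding side_of_def by simp
    have bz: "billiard w z = (w + y, arcsin (- snd d))" using B Q al sd by (simp add: nrm_def)
    have ph: "billiard w z \<in> phase w"
      using bz y01 w arcsin_facts(3)[of "- snd d"] dy1 unfolding phase_def is_corner_s_def by auto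
    have dr: "dir w (billiard w z) = (- fst d, snd d)"
      using bz sd arcsin_facts[of "- snd d"] dy1 sqrt_other[OF u] True unfolding dir_side Let_def by simp
    have bp: "bpt w (fst (billiard w z)) = (w, y)" using bz y01 unfolding bpt_def by auto
    have "xi w (billiard w z) = w / \<bar>fst d\<bar>"
      unfolding xi_def bp dr xiP_def using True by simp
    moreover have "eta w (billiard w z) = eta w z - xi w z"
      unfolding eta_def bp dr using H(4) Q y_def unfolding xi_def eta_def d_def P_def by simp
    ultimately show ?thesis using ph dr bz sd True d_def by simp
  next
    case False
    then have neg: "fst d < 0" using dx d_def by simp
    have Q: "fst P + xiP w P d * fst d = 0" using H(1) False by simp
    have al: "arclen w (0, y) = 2*w + 2 - y" using y01 w unfolding arclen_def by simp
    have sd: "side_of w (2*w + 2 - y) = 3" using y01 w unfolding side_of_def by simp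
    have bz: "billiard w z = (2*w + 2 - y, arcsin (snd d))" using B Q al sd by (simp add: nrm_def)
    have ph: "billiard w z \<in> phase w"
      using bz y01 w arcsin_facts(3)[of "snd d"] dy1 unfolding phase_def is_corner_s_def by auto
    have dr: "dir w (billiard w z) = (- fst d, snd d)"
      using bz sd arcsin_facts[of "snd d"] dy1 sqrt_other[OF u] neg unfolding dir_side Let_def by simp
    have bp: "bpt w (fst (billiard w z)) = (0, y)" using bz y01 w unfolding bpt_def by auto
    have "xi w (billiard w z) = w / \<bar>fst d\<bar>"
      unfolding xi_def bp dr xiP_def using neg by simp
    moreover have "eta w (billiard w z) = eta w z - xi w z"
      unfolding eta_def bp dr using H(4) Q y_def unfolding xi_def eta_def d_def P_def by simp
    ultimately show ?thesis using ph dr bz sd neg d_def by simp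
  qed
qed


lemma step_H:
  assumes w: "w > 0" and z: "z \<in> phase w" and dx: "fst (dir w z) \<noteq> 0" and dy: "snd (dir w z) \<noteq> 0"
    and lt: "eta w z < xi w z"
  shows "billiard w z \<in> phase w \<and> dir w (billiard w z) = (fst (dir w z), - snd (dir w z))
     \<and> eta w (billiard w z) = 1 / \<bar>snd (dir w z)\<bar> \<and> xi w (billiard w z) = xi w z - eta w z
     \<and> side_of w (fst (billiard w z)) = (if snd (dir w z) > 0 then 2 else 0)"
proof -
  define d where "d = dir w z"
  define P where "P = bpt w (fst z)"
  have I: "inw w P d" using inw_phase[OF w z dx dy] d_def P_def by simp
  have lt': "etaP P d < xiP w P d" using lt unfolding xi_def eta_def d_def P_def .
  define x where "x = fst P + etaP P d * fst d"
  note H = hit_H[OF I lt']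
  have x01: "0 < x" "x < w" using H x_def by auto
  have u: "(fst d)^2 + (snd d)^2 = 1" using dir_unit d_def by simp
  have u': "(snd d)^2 + (fst d)^2 = 1" using u by simp
  have dx1: "\<bar>fst d\<bar> < 1" using abs_lt1[OF u'] dy d_def by simp
  have mn: "min (xi w z) (eta w z) = etaP P d" using lt unfolding eta_def P_def d_def by simp
  have B: "billiard w z = (arclen w (x, snd P + etaP P d * snd d),
     arcsin (fst (nrm (side_of w (arclen w (x, snd P + etaP P d * snd d)))) * snd d
       - snd (nrm (side_of w (arclen w (x, snd P + etaP P d * snd d)))) * fst d))"
    using billiard_eq[OF dx dy] unfolding Let_def mn unfolding d_def P_def x_def by simp
  show ?thesis
  proof (cases "snd d > 0")
    case True
    have Q: "snd P + etaP P d * snd d = 1" using H(1) True by simp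
    have al: "arclen w (x, 1) = 2*w + 1 - x" using x01 unfolding arclen_def by simp
    have sd: "side_of w (2*w + 1 - x) = 2" using x01 w unfolding side_of_def by simp
    have bz: "billiard w z = (2*w + 1 - x, arcsin (fst d))" using B Q al sd by (simp add: nrm_def)
    have ph: "billiard w z \<in> phase w"
      using bz x01 w arcsin_facts(3)[of "fst d"] dx1 unfolding phase_def is_corner_s_def by auto
    have dr: "dir w (billiard w z) = (fst d, - snd d)"
      using bz sd arcsin_facts[of "fst d"] dx1 sqrt_other[OF u'] True unfolding dir_side Let_def by simp
    have bp: "bpt w (fst (billiard w z)) = (x, 1)" using bz x01 unfolding bpt_def by auto
    have "eta w (billiard w z) = 1 / \<bar>snd d\<bar>"
      unfolding eta_def bp dr etaP_def using True by simp
    moreover have "xi w (billiard w z) = xi w z - eta w z"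
      unfolding xi_def bp dr using H(4) Q x_def unfolding xi_def eta_def d_def P_def by simp
    ultimately show ?thesis using ph dr bz sd True d_def by simp
  next
    case False
    then have neg: "snd d < 0" using dy d_def by simp
    have Q: "snd P + etaP P d * snd d = 0" using H(1) False by simp
    have al: "arclen w (x, 0) = x" unfolding arclen_def by simp
    have sd: "side_of w x = 0" using x01 w unfolding side_of_def by simp
    have bz: "billiard w z = (x, arcsin (- fst d))" using B Q al sd by (simp add: nrm_def)
    have ph: "billiard w z \<in> phase w"
      using bz x01 w arcsin_facts(3)[of "- fst d"] dx1 unfolding phase_def is_corner_s_def by auto
    have dr: "dir w (billiard w z) = (fst d, - snd d)"
      using bz sd arcsin_facts[of "- fst d"] dx1 sqrt_other[OF u'] neg unfolding dir_side Let_def by simp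
    have bp: "bpt w (fst (billiard w z)) = (x, 0)" using bz x01 unfolding bpt_def by auto
    have "eta w (billiard w z) = 1 / \<bar>snd d\<bar>"
      unfolding eta_def bp dr etaP_def using neg by simp
    moreover have "xi w (billiard w z) = xi w z - eta w z"
      unfolding xi_def bp dr using H(4) Q x_def unfolding xi_def eta_def d_def P_def by simp
    ultimately show ?thesis using ph dr bz sd neg d_def by simp
  qed
qed

lemma regular_neq:
  assumes w: "w > 0" and r: "regular w z" and dx: "fst (dir w z) \<noteq> 0" and dy: "snd (dir w z) \<noteq> 0"
  shows "xi w z \<noteq> eta w z"
proof
  assume eq: "xi w z = eta w z"
  define d where "d = dir w z"
  define P where "P = bpt w (fst z)"
  have hp: "hit_pt w z = (fst P + xiP w P d * fst d, snd P + etaP P d * snd d)"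
    using eq dx dy unfolding hit_pt_def Let_def xi_def eta_def d_def P_def by (simp add: exit_time_eq)
  have "fst P + xiP w P d * fst d \<in> {0, w}" using dx unfolding xiP_def d_def by (auto simp: field_simps)
  moreover have "snd P + etaP P d * snd d \<in> {0, 1}" using dy unfolding etaP_def d_def by (auto simp: field_simps)
  ultimately have "is_corner_pt w (hit_pt w z)" unfolding hp is_corner_pt_def by simp
  then show False using r unfolding regular_def by simp
qed

lemma xi_bounds: "w > 0 \<Longrightarrow> z \<in> phase w \<Longrightarrow> fst (dir w z) \<noteq> 0 \<Longrightarrow> snd (dir w z) \<noteq> 0 \<Longrightarrow>
   0 < xi w z \<and> xi w z \<le> w / \<bar>fst (dir w z)\<bar> \<and> 0 < eta w z \<and> eta w z \<le> 1 / \<bar>snd (dir w z)\<bar>"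
  using xiP_bounds[OF inw_phase] etaP_bounds[OF inw_phase] unfolding xi_def eta_def by blast


lemma x_lt_tan: assumes "0 < x" "x < pi/2" shows "x < tan x"
proof -
  have "\<exists>z. 0 < z \<and> z < x \<and> (tan x - x) - (tan 0 - 0) = (x - 0) * (inverse ((cos z)^2) - 1)"
  proof (rule MVT2)
    show "0 < x" by fact
    fix y assume y: "0 \<le> y" "y \<le> x"
    then have "cos y \<noteq> 0" using assms by (intro cos_gt_zero_pi[THEN less_imp_neq, symmetric]) auto
    then show "DERIV (\<lambda>x. tan x - x) y :> inverse ((cos y)^2) - 1"
      by (auto intro!: derivative_eq_intros)
  qed
  then obtain z where z: "0 < z" "z < x" "tan x - x = x * (inverse ((cos z)^2) - 1)" by auto
  have c0: "0 < cos z" using z assms by (intro cos_gt_zero_pi) auto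
  have c1: "cos z < 1" using z assms cos_monotone_0_pi[of 0 z] by simp
  have "(cos z)^2 < 1" using c0 c1 by (simp add: power_less_one_iff)
  then have "inverse ((cos z)^2) > 1" using c0 by (simp add: one_less_inverse)
  then show ?thesis using z by (smt (verit) mult_pos_pos)
qed

definition phi :: "real \<Rightarrow> real" where "phi t = sin t / t"

lemma phi_pos: "0 < t \<Longrightarrow> t < pi/2 \<Longrightarrow> phi t > 0"
proof -
  assume a: "0 < t" "t < pi/2"
  then have "sin t > 0" by (intro sin_gt_zero) auto
  then show ?thesis using a unfolding phi_def by simp
qed

lemma phi_decr: assumes "0 < s" "s < t" "t < pi/2" shows "phi t < phi s"
proof -
  have "\<exists>z. s < z \<and> z < t \<and> phi t - phi s = (t - s) * ((cos z * z - sin z) / z^2)"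
  proof (rule MVT2)
    show "s < t" by fact
    fix y assume y: "s \<le> y" "y \<le> t"
    then have "y \<noteq> 0" using assms by auto
    then show "DERIV phi y :> (cos y * y - sin y) / y^2"
      unfolding phi_def by (auto intro!: derivative_eq_intros simp: power2_eq_square)
  qed
  then obtain z where z: "s < z" "z < t" "phi t - phi s = (t - s) * ((cos z * z - sin z) / z^2)" by auto
  have z0: "0 < z" "z < pi/2" using z assms by auto
  have c0: "0 < cos z" using z0 by (intro cos_gt_zero_pi) auto
  have "z < sin z / cos z" using x_lt_tan[OF z0] by (simp add: tan_def)
  then have "z * cos z < sin z" using c0 by (simp add: pos_less_divide_eq)
  then have "cos z * z - sin z < 0" by (simp add: mult.commute)
  then have "(cos z * z - sin z) / z^2 < 0" using z0 by (simp add: divide_neg_pos)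
  then show ?thesis using z assms by (smt (verit) mult_pos_neg)
qed

definition G :: "real \<Rightarrow> real" where "G t = phi t / phi (pi/2 - t)"

lemma G_decr: assumes "0 < s" "s < t" "t < pi/2" shows "G t < G s"
proof -
  have a: "phi t < phi s" by (rule phi_decr) (use assms in auto)
  have b: "phi (pi/2 - s) < phi (pi/2 - t)" by (rule phi_decr) (use assms in auto)
  have p: "phi t > 0" "phi s > 0" "phi (pi/2 - s) > 0" "phi (pi/2 - t) > 0"
    using assms by (auto intro!: phi_pos)
  have "phi t / phi (pi/2 - t) < phi s / phi (pi/2 - t)" using a p by (simp add: divide_strict_right_mono)
  also have "\<dots> < phi s / phi (pi/2 - s)" using b p by (simp add: divide_strict_left_mono)
  finally show ?thesis unfolding G_def .
qed

lemma G_formula: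
  fixes p q :: nat assumes "p > 0" "q > 0"
  shows "real p / real q * cot (pi * real p / (2 * real (p + q))) = G (pi * real q / (2 * real (p + q)))"
    "0 < pi * real q / (2 * real (p + q))" "pi * real q / (2 * real (p + q)) < pi/2"
proof -
  define t where "t = pi * real q / (2 * real (p + q))"
  have t0: "0 < t" using assms unfolding t_def by simp
  have pq0: "real (p + q) > 0" using assms by simp
  have tt: "t = (pi/2) * (real q / real (p + q))" unfolding t_def by simp
  have "real q / real (p + q) < 1" using assms pq0 by (simp add: divide_less_eq)
  then have "(pi/2) * (real q / real (p + q)) < (pi/2) * 1" by (intro mult_strict_left_mono) auto
  then have tl: "t < pi/2" using tt by linarith
  have s1: "pi * real p / (2 * real (p + q)) + t = pi * (real p + real q) / (2 * real (p + q))"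
    unfolding t_def by (simp add: add_divide_distrib[symmetric] distrib_left)
  have gen: "\<And>n::real. n \<noteq> 0 \<Longrightarrow> pi * n / (2 * n) = pi / 2" by simp
  have "pi * (real p + real q) / (2 * real (p + q)) = pi * real (p+q) / (2 * real (p + q))" by simp
  then have "pi * (real p + real q) / (2 * real (p + q)) = pi / 2" using gen[of "real (p+q)"] pq0 by linarith
  then have e: "pi * real p / (2 * real (p + q)) = pi/2 - t" using s1 by linarith
  have pq: "real p / real q = (pi/2 - t) / t"
  proof -
    have "(pi/2 - t) / t = (pi * real p / (2 * real (p + q))) / (pi * real q / (2 * real (p + q)))"
      by (simp only: e t_def)
    also have "\<dots> = ((pi / (2 * real (p + q))) * real p) / ((pi / (2 * real (p + q))) * real q)"
      by simp
    also have "\<dots> = real p / real q" using assms by (subst mult_divide_mult_cancel_left) auto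
    finally show ?thesis by simp
  qed
  have cs1: "cos (pi/2 - t) = sin t" using sin_cos_eq[of t] by simp
  have cs2: "sin (pi/2 - t) = cos t" using cos_sin_eq[of t] by simp
  have c: "cot (pi/2 - t) = sin t / cos t" by (simp add: cot_def cs1 cs2)
  have ph: "phi (pi/2 - t) = cos t / (pi/2 - t)" unfolding phi_def by (simp add: cs2)
  have ct: "cos t > 0" using t0 tl by (intro cos_gt_zero_pi) auto
  have fin: "(pi/2 - t) / t * (sin t / cos t) = (sin t / t) / (cos t / (pi/2 - t))"
    using ct t0 tl by (simp add: divide_simps)
  have tq: "pi * real q / (2 * real (p + q)) = t" by (simp only: t_def)
  show "real p / real q * cot (pi * real p / (2 * real (p + q))) = G (pi * real q / (2 * real (p + q)))"
    apply (simp only: e tq pq c G_def ph)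
    using fin by (simp only: phi_def)
  show "0 < pi * real q / (2 * real (p + q))" "pi * real q / (2 * real (p + q)) < pi/2"
    using t0 tl t_def by auto
qed

lemma G_inj: "0 < s \<Longrightarrow> s < pi/2 \<Longrightarrow> 0 < t \<Longrightarrow> t < pi/2 \<Longrightarrow> G s = G t \<Longrightarrow> s = t"
  using G_decr[of s t] G_decr[of t s] by (cases "s < t"; cases "t < s") auto

lemma ratio_unique:
  fixes p q p' q' :: nat
  assumes "p > 0" "q > 0" "p' > 0" "q' > 0"
    "real p / real q * cot (pi * real p / (2 * real (p + q))) = real p' / real q' * cot (pi * real p' / (2 * real (p' + q')))"
  shows "real p / real q = real p' / real q'"
proof -
  have "pi * real q / (2 * real (p + q)) = pi * real q' / (2 * real (p' + q'))"
    using G_inj G_formula[OF assms(1,2)] G_formula[OF assms(3,4)] assms(5) by metis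
  then have "real q * real (p' + q') = real q' * real (p + q)" using assms by (simp add: field_simps)
  then have "real q * real p' = real q' * real p" by (simp add: algebra_simps)
  then show ?thesis using assms by (simp add: field_simps)
qed


definition beta :: "real \<Rightarrow> real \<times> real \<Rightarrow> real" where
  "beta w z = (if side_of w (fst z) = 0 \<or> side_of w (fst z) = 2 then \<bar>snd z\<bar> else pi/2 - \<bar>snd z\<bar>)"

lemma abs_arcsin_sin: "\<bar>t\<bar> < pi/2 \<Longrightarrow> \<bar>arcsin (sin t)\<bar> = \<bar>t\<bar>"
  by (simp add: arcsin_sin)

lemma abs_arcsin_msin: "\<bar>t\<bar> < pi/2 \<Longrightarrow> \<bar>arcsin (- sin t)\<bar> = \<bar>t\<bar>"
  by (simp add: arcsin_minus arcsin_sin)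

lemma abs_arcsin_cos: assumes "\<bar>t\<bar> < pi/2" shows "\<bar>arcsin (cos t)\<bar> = pi/2 - \<bar>t\<bar>"
proof -
  have "cos t = sin (pi/2 - \<bar>t\<bar>)" using cos_sin_eq[of "\<bar>t\<bar>"] by simp
  moreover have "arcsin (sin (pi/2 - \<bar>t\<bar>)) = pi/2 - \<bar>t\<bar>" using assms by (intro arcsin_sin) auto
  ultimately show ?thesis using assms by simp
qed

lemma abs_arcsin_mcos: "\<bar>t\<bar> < pi/2 \<Longrightarrow> \<bar>arcsin (- cos t)\<bar> = pi/2 - \<bar>t\<bar>"
  using abs_arcsin_cos[of t] by (simp add: arcsin_minus)

lemma billiard_snd:
  "snd (billiard w z) = (let n' = nrm (side_of w (fst (billiard w z))); d = dir w z in
      arcsin (fst n' * snd d - snd n' * fst d))"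
  unfolding billiard_def Let_def by (simp add: algebra_simps)

lemma beta_billiard:
  assumes "z \<in> phase w"
  shows "beta w (billiard w z) = beta w z"
proof -
  have t: "\<bar>snd z\<bar> < pi/2" using assms unfolding phase_def by simp
  note A = abs_arcsin_sin[OF t] abs_arcsin_msin[OF t] abs_arcsin_cos[OF t] abs_arcsin_mcos[OF t]
  have j: "side_of w (fst (billiard w z)) \<in> {0,1,2,3}" by (rule side_of_cases)
  have i: "side_of w (fst z) \<in> {0,1,2,3}" by (rule side_of_cases)
  show ?thesis
    using i j unfolding beta_def billiard_snd[of w z] Let_def dir_side nrm_def
    by (auto simp: A)
qed

lemma beta_lam:
  assumes "z \<in> phase w" "l > 0"
  shows "beta w (billiard_lam w l z) =
     (if side_of w (fst (billiard w z)) = 1 \<or> side_of w (fst (billiard w z)) = 3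
      then l * beta w z + (1 - l) * (pi/2) else l * beta w z)"
proof -
  have e: "billiard_lam w l z = (fst (billiard w z), l * snd (billiard w z))"
    unfolding billiard_lam_def R_lam_def by simp
  have b: "beta w (billiard w z) = beta w z" by (rule beta_billiard[OF assms(1)])
  have j: "side_of w (fst (billiard w z)) \<in> {0,1,2,3}" by (rule side_of_cases)
  show ?thesis
  proof (cases "side_of w (fst (billiard w z)) = 1 \<or> side_of w (fst (billiard w z)) = 3")
    case True
    then have h: "\<bar>snd (billiard w z)\<bar> = pi/2 - beta w z" using b unfolding beta_def by auto
    have "beta w (billiard_lam w l z) = pi/2 - l * \<bar>snd (billiard w z)\<bar>"
      using True assms(2) unfolding e beta_def by (auto simp: abs_mult)
    then show ?thesis using True h by (simp add: algebra_simps diff_divide_distrib)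
  next
    case False
    then have h: "\<bar>snd (billiard w z)\<bar> = beta w z" using b j unfolding beta_def by auto
    have "beta w (billiard_lam w l z) = l * \<bar>snd (billiard w z)\<bar>"
      using False j assms(2) unfolding e beta_def by (auto simp: abs_mult)
    then show ?thesis using False h by simp
  qed
qed

lemma beta_dir:
  assumes "z \<in> phase w"
  shows "\<bar>fst (dir w z)\<bar> = sin (beta w z)" "\<bar>snd (dir w z)\<bar> = cos (beta w z)"
    "0 \<le> beta w z" "beta w z \<le> pi/2"
proof -
  have t: "\<bar>snd z\<bar> < pi/2" using assms unfolding phase_def by simp
  have s1: "\<bar>sin (snd z)\<bar> = sin \<bar>snd z\<bar>"
  proof (cases "snd z \<ge> 0")
    case True then show ?thesis using t by (simp add: sin_ge_zero)
  next
    case False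
    then have "sin (- snd z) \<ge> 0" using t by (intro sin_ge_zero) auto
    then show ?thesis using False by simp
  qed
  have c1: "cos (snd z) = sin (pi/2 - \<bar>snd z\<bar>)" using cos_sin_eq[of "\<bar>snd z\<bar>"] by simp
  have s2: "\<bar>sin (snd z)\<bar> = cos (pi/2 - \<bar>snd z\<bar>)" using s1 sin_cos_eq[of "\<bar>snd z\<bar>"] by simp
  have c0: "cos (snd z) > 0" using cos_pos_phase[OF assms] .
  have i: "side_of w (fst z) \<in> {0,1,2,3}" by (rule side_of_cases)
  show "\<bar>fst (dir w z)\<bar> = sin (beta w z)" "\<bar>snd (dir w z)\<bar> = cos (beta w z)"
    using i c0 s1 c1 s2 unfolding dir_side Let_def beta_def by auto
  show "0 \<le> beta w z" "beta w z \<le> pi/2" using t unfolding beta_def by auto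
qed

lemma affine_iter:
  fixes b c :: "nat \<Rightarrow> real"
  assumes "\<And>n. b (Suc n) = l * b n + c n"
  shows "b (n + m) = l^m * b n + (\<Sum>k<m. l^(m - 1 - k) * c (n + k))"
proof (induction m)
  case 0 then show ?case by simp
next
  case (Suc m)
  have "b (n + Suc m) = l * b (n + m) + c (n + m)" using assms by simp
  also have "\<dots> = l^(Suc m) * b n + (\<Sum>k<m. l * (l^(m - 1 - k) * c (n + k))) + c (n + m)"
    using Suc by (simp add: algebra_simps sum_distrib_left)
  also have "(\<Sum>k<m. l * (l^(m - 1 - k) * c (n + k))) = (\<Sum>k<m. l^(Suc m - 1 - k) * c (n + k))"
    by (intro sum.cong refl) (auto simp: Suc_diff_Suc power_Suc[symmetric] simp del: power_Suc)
  finally show ?case by simp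
qed

lemma fixpt:
  fixes b c :: "nat \<Rightarrow> real"
  assumes rec: "\<And>n. b (Suc n) = l * b n + c n"
    and cp: "\<And>n. c (n + L) = c n" and L: "L > 0" and K: "K > 0"
    and bp: "\<And>n. b (n + K) = b n" and l: "l > 0" "l \<noteq> 1"
  shows "b 0 * (1 - l^L) = (\<Sum>k<L. l^(L - 1 - k) * c k)"
proof -
  define C where "C = (\<Sum>k<L. l^(L - 1 - k) * c k)"
  have cpm: "c (j * L + k) = c k" for j k
  proof (induction j)
    case 0 then show ?case by simp
  next
    case (Suc j)
    have "c (Suc j * L + k) = c ((j * L + k) + L)" by (simp add: algebra_simps)
    then show ?case using cp Suc by simp
  qed
  have step: "b ((Suc j) * L) = l^L * b (j * L) + C" for j
  proof -
    have "b (j * L + L) = l^L * b (j * L) + (\<Sum>k<L. l^(L - 1 - k) * c (j * L + k))"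
      by (rule affine_iter[of b l c, OF rec])
    then show ?thesis unfolding C_def cpm by (simp add: add.commute)
  qed
  define e where "e j = b (j * L) * (1 - l^L) - C" for j
  have ee: "e (Suc j) = l^L * e j" for j
    unfolding e_def step by (simp add: algebra_simps)
  have eK: "e j = (l^L)^j * e 0" for j
    by (induction j) (auto simp: ee)
  have bK: "b (j * K) = b 0" for j
  proof (induction j)
    case (Suc j) then show ?case using bp[of "j * K"] by (simp add: add.commute)
  qed simp
  have "e K = e 0" unfolding e_def using bK[of L] by (simp add: mult.commute)
  then have "e 0 * (1 - (l^L)^K) = 0" using eK[of K] by (simp add: algebra_simps)
  moreover have "(l^L)^K \<noteq> 1"
  proof
    assume "(l^L)^K = 1"
    then have "l^(L*K) = 1" by (simp add: power_mult)
    moreover have "L * K > 0" using L K by simp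
    ultimately have "l = 1" using l(1) power_less_one_iff[of l "L*K"] one_less_power[of l "L*K"]
      by (cases "l < 1"; cases "l > 1") auto
    then show False using l by simp
  qed
  ultimately have "e 0 = 0" by simp
  then show ?thesis unfolding e_def C_def by simp
qed


definition chi :: "nat \<Rightarrow> real" where "chi s = (if s = 1 \<or> s = 3 then 1 else 0)"

lemma regular_phase: "regular w z \<Longrightarrow> z \<in> phase w"
  unfolding regular_def by simp

lemma itin_period:
  assumes "(f ^^ L) q = q"
  shows "itin w f q (m + L) = itin w f q m"
proof -
  have "(f ^^ (m + L)) q = (f ^^ m) ((f ^^ L) q)" by (simp add: funpow_add)
  then show ?thesis unfolding itin_def using assms by simp
qed

lemma orbit_eq:
  assumes "periodic_pt w (billiard_lam w l) y" "itin w (billiard_lam w l) y = itin w (billiard w) q"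
    "(billiard w ^^ L) q = q" "L > 0" "l > 0" "l \<noteq> 1"
  shows "beta w y * (\<Sum>i<L. l^i) = (pi/2) * (\<Sum>k<L. l^(L - 1 - k) * chi (itin w (billiard w) q (Suc k)))"
proof -
  define f where "f = billiard_lam w l"
  obtain K where K: "K > 0" "(f ^^ K) y = y" and reg: "\<And>m. regular w ((f ^^ m) y)"
    using assms(1) unfolding periodic_pt_def f_def by auto
  define b where "b m = beta w ((f ^^ m) y)" for m
  define c where "c m = (1 - l) * (pi/2) * chi (itin w (billiard w) q (Suc m))" for m
  have it: "itin w f y = itin w (billiard w) q" using assms(2) f_def by simp
  have rec: "b (Suc m) = l * b m + c m" for m
  proof -
    have ph: "(f ^^ m) y \<in> phase w" using reg regular_phase by blast
    have e: "(f ^^ Suc m) y = f ((f ^^ m) y)" by simp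
    have s: "side_of w (fst (billiard w ((f ^^ m) y))) = itin w (billiard w) q (Suc m)"
    proof -
      have "itin w f y (Suc m) = side_of w (fst (f ((f ^^ m) y)))" unfolding itin_def by simp
      also have "fst (f ((f ^^ m) y)) = fst (billiard w ((f ^^ m) y))"
        unfolding f_def billiard_lam_def R_lam_def by simp
      finally show ?thesis using it by simp
    qed
    show ?thesis unfolding b_def c_def e f_def
      using beta_lam[OF ph[unfolded f_def] assms(5)] s[unfolded f_def] unfolding chi_def
      by (auto simp: algebra_simps)
  qed
  have cp: "c (m + L) = c m" for m
    unfolding c_def using itin_period[OF assms(3), of w "Suc m"] by simp
  have bp: "b (m + K) = b m" for m
    unfolding b_def by (simp add: funpow_add K(2))
  have fp: "b 0 * (1 - l^L) = (\<Sum>k<L. l^(L - 1 - k) * c k)"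
    by (rule fixpt[of b l c L K, OF rec cp assms(4) K(1) bp assms(5,6)])
  have "b 0 * (1 - l^L) = (1 - l) * (b 0 * (\<Sum>i<L. l^i))"
    by (simp add: one_diff_power_eq)
  moreover have "(\<Sum>k<L. l^(L - 1 - k) * c k) = (1 - l) * ((pi/2) * (\<Sum>k<L. l^(L - 1 - k) * chi (itin w (billiard w) q (Suc k))))"
    unfolding c_def by (simp add: sum_distrib_left algebra_simps)
  ultimately have "(1 - l) * (b 0 * (\<Sum>i<L. l^i)) = (1 - l) * ((pi/2) * (\<Sum>k<L. l^(L - 1 - k) * chi (itin w (billiard w) q (Suc k))))"
    using fp by simp
  then show ?thesis using assms(6) unfolding b_def by simp
qed

lemma plus_gt1:
  fixes lam :: "nat \<Rightarrow> real"
  assumes "\<forall>n. lam (Suc n) < lam n" "lam \<longlonglongrightarrow> 1"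
  shows "lam n > 1"
proof -
  have "decseq lam" using assms(1) by (intro decseq_SucI) (simp add: less_imp_le)
  then have "1 \<le> lam (Suc n)" using decseq_ge assms(2) by blast
  then show ?thesis using assms(1)[rule_format, of n] by linarith
qed

lemma lam_relation:
  assumes st: "lam_plus_stable w q" and L: "(billiard w ^^ L) q = q" "L > 0"
  shows "beta w q * real L = (pi/2) * (\<Sum>k<L. chi (itin w (billiard w) q (Suc k)))"
proof -
  obtain lam y where d: "\<forall>n. lam (Suc n) < lam n" "lam \<longlonglongrightarrow> 1"
     "\<forall>n. periodic_pt w (billiard_lam w (lam n)) (y n) \<and> itin w (billiard_lam w (lam n)) (y n) = itin w (billiard w) q"
     "y \<longlonglongrightarrow> q"
    using st unfolding lam_plus_stable_def by blast
  have g1: "lam n > 1" for n using plus_gt1[OF d(1,2)] .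
  have eq: "beta w (y n) * (\<Sum>i<L. (lam n)^i) = (pi/2) * (\<Sum>k<L. (lam n)^(L - 1 - k) * chi (itin w (billiard w) q (Suc k)))" for n
    using orbit_eq[of w "lam n" "y n" q L] d(3) L g1[of n] by auto
  have side: "side_of w (fst (y n)) = side_of w (fst q)" for n
    using d(3) unfolding itin_def by (metis funpow_0)
  have bt: "(\<lambda>n. beta w (y n)) \<longlonglongrightarrow> beta w q"
  proof -
    have "(\<lambda>n. snd (y n)) \<longlonglongrightarrow> snd q" using d(4) by (rule tendsto_snd)
    then have a: "(\<lambda>n. \<bar>snd (y n)\<bar>) \<longlonglongrightarrow> \<bar>snd q\<bar>" by (rule tendsto_rabs)
    show ?thesis
    proof (cases "side_of w (fst q) = 0 \<or> side_of w (fst q) = 2")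
      case True then show ?thesis unfolding beta_def side using a by simp
    next
      case False then show ?thesis unfolding beta_def side using a by (auto intro!: tendsto_intros)
    qed
  qed
  have l1: "(\<lambda>n. beta w (y n) * (\<Sum>i<L. (lam n)^i)) \<longlonglongrightarrow> beta w q * (\<Sum>i<L. 1^i)"
    by (intro tendsto_intros bt d(2))
  have l2: "(\<lambda>n. (pi/2) * (\<Sum>k<L. (lam n)^(L - 1 - k) * chi (itin w (billiard w) q (Suc k))))
      \<longlonglongrightarrow> (pi/2) * (\<Sum>k<L. 1^(L - 1 - k) * chi (itin w (billiard w) q (Suc k)))"
    by (intro tendsto_intros d(2))
  have "beta w q * (\<Sum>i<L. 1^i) = (pi/2) * (\<Sum>k<L. 1^(L - 1 - k) * chi (itin w (billiard w) q (Suc k)))"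
    using LIMSEQ_unique[OF l1] l2 eq by simp
  then show ?thesis by simp
qed


definition clk :: "real \<Rightarrow> real \<Rightarrow> (nat \<Rightarrow> real) \<Rightarrow> (nat \<Rightarrow> real) \<Rightarrow> bool" where
  "clk A B X Y \<longleftrightarrow> (\<forall>k. 0 < X k \<and> X k \<le> A \<and> 0 < Y k \<and> Y k \<le> B \<and> X k \<noteq> Y k \<and>
     X (Suc k) = (if X k < Y k then A else X k - Y k) \<and> Y (Suc k) = (if X k < Y k then Y k - X k else B))"

definition cv :: "(nat \<Rightarrow> real) \<Rightarrow> (nat \<Rightarrow> real) \<Rightarrow> nat \<Rightarrow> nat" where
  "cv X Y n = (\<Sum>k<n. if X k < Y k then 1 else 0)"

definition tau :: "(nat \<Rightarrow> real) \<Rightarrow> (nat \<Rightarrow> real) \<Rightarrow> nat \<Rightarrow> real" where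
  "tau X Y n = (\<Sum>k<n. min (X k) (Y k))"

lemma cv_0 [simp]: "cv X Y 0 = 0"
  unfolding cv_def by simp

lemma cv_Suc: "cv X Y (Suc n) = cv X Y n + (if X n < Y n then 1 else 0)"
  unfolding cv_def by simp

lemma cv_le: "cv X Y n \<le> n"
  by (induction n) (auto simp: cv_Suc)

lemma cv_mono: "m \<le> n \<Longrightarrow> cv X Y m \<le> cv X Y n"
  by (induction n) (auto simp: cv_Suc le_Suc_eq)

lemma clk_inv:
  assumes "clk A B X Y"
  shows "X n + tau X Y n = X 0 + A * real (cv X Y n) \<and> Y n + tau X Y n = Y 0 + B * real (n - cv X Y n)"
proof (induction n)
  case 0 then show ?case by (simp add: tau_def cv_def)
next
  case (Suc n)
  have c: "cv X Y n \<le> n" by (rule cv_le)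
  have s: "X (Suc n) = (if X n < Y n then A else X n - Y n)" "Y (Suc n) = (if X n < Y n then Y n - X n else B)"
    using assms unfolding clk_def by auto
  have t: "tau X Y (Suc n) = tau X Y n + min (X n) (Y n)" unfolding tau_def by simp
  show ?case
  proof (cases "X n < Y n")
    case True
    then show ?thesis using Suc s t c by (simp add: cv_Suc algebra_simps Suc_diff_le)
  next
    case False
    have "Suc n - cv X Y n = Suc (n - cv X Y n)" using c by simp
    then show ?thesis using False Suc s t c by (simp add: cv_Suc algebra_simps)
  qed
qed

lemma clk_tau_pos: "clk A B X Y \<Longrightarrow> n > 0 \<Longrightarrow> tau X Y n > 0"
  unfolding tau_def clk_def
  by (intro sum_pos) (auto simp: min_def)

lemma clk_period:
  assumes c: "clk A B X Y" and p: "X L = X 0" "Y L = Y 0" "L > 0"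
  shows "A * real (cv X Y L) = B * real (L - cv X Y L)" "A * real (cv X Y L) > 0"
proof -
  note i = clk_inv[OF c, of L]
  have t: "tau X Y L > 0" using clk_tau_pos[OF c p(3)] .
  show "A * real (cv X Y L) = B * real (L - cv X Y L)" using i p by simp
  show "A * real (cv X Y L) > 0" using i p t by simp
qed

lemma clk_Vstep_exists:
  assumes c: "clk A B X Y" and B: "B > 0"
  shows "\<exists>n\<ge>m. X n < Y n"
proof (rule ccontr)
  assume "\<not> ?thesis"
  then have h: "\<And>n. n \<ge> m \<Longrightarrow> X n > Y n" using c unfolding clk_def by (meson linorder_neqE_linordered_idom)
  have Y1: "Y (Suc n) = B" if "n \<ge> m" for n using h[OF that] c unfolding clk_def by auto
  have X1: "X (Suc n) = X n - Y n" if "n \<ge> m" for n using h[OF that] c unfolding clk_def by auto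
  have dec: "X (Suc m + Suc t) = X (Suc m) - real (Suc t) * B" for t
  proof (induction t)
    case 0 then show ?case using X1[of "Suc m"] Y1[of m] by simp
  next
    case (Suc t)
    have "X (Suc m + Suc (Suc t)) = X (Suc m + Suc t) - Y (Suc m + Suc t)"
      using X1[of "Suc m + Suc t"] by simp
    also have "Y (Suc m + Suc t) = B" using Y1[of "m + Suc t"] by simp
    finally show ?case using Suc by (simp add: algebra_simps)
  qed
  obtain t where t: "real t * B > X (Suc m)" using reals_Archimedean3[OF B] by blast
  have "X (Suc m + Suc t) < 0" using dec[of t] t B by (simp add: algebra_simps)
  then show False using c unfolding clk_def by (meson less_asym)
qed

lemma clk_cv_unbounded:
  assumes c: "clk A B X Y" and B: "B > 0"
  shows "\<exists>n. cv X Y n \<ge> K"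
proof (induction K)
  case 0 then show ?case by simp
next
  case (Suc K)
  then obtain n where n: "cv X Y n \<ge> K" by blast
  obtain n' where n': "n' \<ge> n" "X n' < Y n'" using clk_Vstep_exists[OF c B, of n] by blast
  have "cv X Y (Suc n') = cv X Y n' + 1" using n' by (simp add: cv_Suc)
  moreover have "cv X Y n' \<ge> cv X Y n" using cv_mono n' by blast
  ultimately show ?case using n by (intro exI[of _ "Suc n'"]) simp
qed

lemma clk_hit:
  assumes c: "clk A B X Y" and B: "B > 0"
  shows "\<exists>j. X j < Y j \<and> cv X Y (Suc j) = Suc K"
proof -
  define n where "n = (LEAST n. cv X Y n \<ge> Suc K)"
  have ex: "\<exists>n. cv X Y n \<ge> Suc K" by (rule clk_cv_unbounded[OF c B])
  have n1: "cv X Y n \<ge> Suc K" unfolding n_def by (rule LeastI_ex[OF ex])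
  have n0: "n \<noteq> 0"
  proof
    assume "n = 0" then show False using n1 by simp
  qed
  then obtain j where j: "n = Suc j" by (cases n) auto
  have "\<not> cv X Y j \<ge> Suc K" using not_less_Least[of j "\<lambda>n. cv X Y n \<ge> Suc K"] j unfolding n_def by simp
  then have "cv X Y j \<le> K" by simp
  then show ?thesis using n1 j by (intro exI[of _ j]) (auto simp: cv_Suc split: if_splits)
qed

lemma int_window:
  fixes d :: real and c M :: int
  assumes "0 \<le> d" "d < 1" "M \<ge> 1" "0 < d + of_int c * of_int M" "d + of_int c * of_int M < of_int M"
  shows "c = 0"
proof (rule ccontr)
  assume "c \<noteq> 0"
  define r where "r = (of_int c :: real)"
  define m where "m = (of_int M :: real)"
  have m1: "m \<ge> 1" using assms(3) unfolding m_def by simp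
  have A: "0 < d + r * m" "d + r * m < m" using assms(4,5) unfolding r_def m_def by auto
  from \<open>c \<noteq> 0\<close> consider "c \<ge> 1" | "c \<le> -1" by linarith
  then show False
  proof cases
    case 1
    then have "r \<ge> 1" unfolding r_def by simp
    then have "1 * m \<le> r * m" using m1 by (intro mult_right_mono) auto
    then show False using A assms(1) by linarith
  next
    case 2
    then have "r \<le> -1" unfolding r_def by simp
    then have "r * m \<le> (-1) * m" using m1 by (intro mult_right_mono) auto
    then show False using A assms(2) m1 by linarith
  qed
qed

lemma modinv:
  fixes N M :: nat and i :: int
  assumes "coprime N M" "M > 0"
  shows "\<exists>k::nat. \<exists>c::int. int k * int N = i + c * int M"
proof -
  have g: "gcd (int N) (int M) = 1" using assms(1) by (simp add: coprime_iff_gcd_eq_1 gcd_int_def)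
  obtain u v where uv: "u * int N + v * int M = 1" using bezout_int[of "int N" "int M"] g by auto
  define k where "k = (u * i) mod int M"
  have k0: "k \<ge> 0" unfolding k_def using assms(2) by simp
  define s where "s = (u * i) div int M"
  have ui: "u * i = k + s * int M" unfolding k_def s_def by (simp add: mult.commute)
  have "k * int N = u * i * int N - s * int M * int N" using ui by (simp add: algebra_simps)
  also have "u * i * int N = i * (1 - v * int M)"
  proof -
    have e: "u * int N = 1 - v * int M" using uv by linarith
    have "u * i * int N = i * (u * int N)" by (simp add: algebra_simps)
    then show ?thesis using e by simp
  qed
  finally have "k * int N = i + (- i * v - s * int N) * int M" by (simp add: algebra_simps)
  then show ?thesis using k0 by (intro exI[of _ "nat k"] exI[of _ "- i * v - s * int N"]) simp
qed


lemma clk_after_V: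
  assumes c: "clk A B X Y" and lt: "X j < Y j"
  shows "X (Suc j) = A" "Y (Suc j) < B"
proof -
  show "X (Suc j) = A" using c lt unfolding clk_def by simp
  have "Y (Suc j) = Y j - X j" using c lt unfolding clk_def by simp
  moreover have "X j > 0" "Y j \<le> B" using c unfolding clk_def by auto
  ultimately show "Y (Suc j) < B" by simp
qed

lemma normal_exists:
  assumes c: "clk A B X Y" and A: "A = real N * u" and B: "B = real M * u" and u: "u > 0"
    and NM: "N > 0" "M > 0" "coprime N M"
  shows "\<exists>j. X j < Y j \<and> 0 < Y (Suc j) \<and> Y (Suc j) < u"
proof -
  have B0: "B > 0" using B u NM by simp
  define r where "r = (Y 0 - X 0) / u"
  define i where "i = floor r"
  define dl where "dl = r - of_int i"
  have dl: "0 \<le> dl" "dl < 1" unfolding dl_def i_def by linarith+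
  obtain k :: nat and c0 :: int where kc: "int k * int N = i + c0 * int M" using modinv[OF NM(3) NM(2)] by blast
  obtain j where j: "X j < Y j" "cv X Y (Suc j) = Suc k" using clk_hit[OF c B0] by blast
  define h where "h = Suc j - Suc k"
  note inv = clk_inv[OF c, of "Suc j"]
  have XA: "X (Suc j) = A" and YB: "Y (Suc j) < B" using clk_after_V[OF c j(1)] by auto
  have Ypos: "Y (Suc j) > 0" using c unfolding clk_def by auto
  have tau: "tau X Y (Suc j) = X 0 + A * real k" using inv XA j(2) by (simp add: algebra_simps)
  have Yeq: "Y (Suc j) = Y 0 - X 0 - A * real k + B * real h" using inv tau j(2) unfolding h_def by simp
  have "Y (Suc j) / u = r - real k * real N + real h * real M"
    unfolding Yeq A B r_def using u by (simp add: field_simps)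
  also have "r = dl + of_int i" unfolding dl_def by simp
  also have "real k * real N = of_int i + of_int c0 * real M"
  proof -
    have "real_of_int (int k * int N) = real_of_int (i + c0 * int M)" using kc by simp
    then show ?thesis by simp
  qed
  finally have Yu: "Y (Suc j) / u = dl + of_int (int h - c0) * of_int (int M)" by (simp add: algebra_simps)
  have "0 < Y (Suc j) / u" using Ypos u by simp
  moreover have "Y (Suc j) / u < real M" using YB B u by (simp add: divide_less_eq mult.commute)
  ultimately have "int h - c0 = 0" using int_window[OF dl, of "int M" "int h - c0"] NM Yu by simp
  then have "Y (Suc j) / u = dl" using Yu by simp
  then have "Y (Suc j) = dl * u" using u by (simp add: divide_eq_eq)
  then show ?thesis using j(1) Ypos dl u by (intro exI[of _ j]) (simp add: mult_less_cancel_right1)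
qed

lemma flip_exists:
  assumes c: "clk A B X Y" and A: "A = real N * u" and B: "B = real M * u" and u: "u > 0"
    and NM: "N > 0" "M > 0" and X0: "X 0 = A" and Y0: "0 < Y 0" "Y 0 < u"
  shows "\<exists>j. X j < Y j \<and> cv X Y (Suc j) = M \<and> Suc j - cv X Y (Suc j) = N \<and> Y (Suc j) = Y 0"
proof -
  have B0: "B > 0" using B u NM by simp
  obtain j where j: "X j < Y j" "cv X Y (Suc j) = Suc (M - 1)" using clk_hit[OF c B0] by blast
  have jM: "cv X Y (Suc j) = M" using j NM by simp
  define h where "h = Suc j - M"
  note inv = clk_inv[OF c, of "Suc j"]
  have XA: "X (Suc j) = A" and YB: "Y (Suc j) < B" using clk_after_V[OF c j(1)] by auto
  have Ypos: "Y (Suc j) > 0" using c unfolding clk_def by auto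
  have tau: "tau X Y (Suc j) = A * real M" using inv XA jM X0 by (simp add: algebra_simps)
  have Yeq: "Y (Suc j) = Y 0 - A * real M + B * real h" using inv tau jM unfolding h_def by simp
  have "Y (Suc j) / u = Y 0 / u + of_int (int h - int N) * of_int (int M)"
    unfolding Yeq A B using u by (simp add: field_simps)
  moreover have "0 \<le> Y 0 / u" "Y 0 / u < 1" using Y0 u by (auto simp: divide_less_eq)
  moreover have "0 < Y (Suc j) / u" using Ypos u by simp
  moreover have "Y (Suc j) / u < real M" using YB B u by (simp add: divide_less_eq mult.commute)
  ultimately have hN: "int h - int N = 0" using int_window[of "Y 0 / u" "int M" "int h - int N"] NM by simp
  then have "Y (Suc j) / u = Y 0 / u" using \<open>Y (Suc j) / u = Y 0 / u + _\<close> by simp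
  then have "Y (Suc j) = Y 0" using u by simp
  then show ?thesis using j(1) jM hN unfolding h_def by (intro exI[of _ j]) simp
qed

lemma order_same:
  assumes c1: "clk A B X1 Y1" and c2: "clk A B X2 Y2"
    and o: "\<forall>k l::nat. (X1 0 + real k * A < Y1 0 + real l * B \<longleftrightarrow> X2 0 + real k * A < Y2 0 + real l * B)"
  shows "X1 n < Y1 n \<longleftrightarrow> X2 n < Y2 n"
proof -
  have "\<forall>k l::nat. (X1 n + real k * A < Y1 n + real l * B \<longleftrightarrow> X2 n + real k * A < Y2 n + real l * B)"
  proof (induction n)
    case 0 then show ?case using o by simp
  next
    case (Suc n)
    have e1: "X1 n < Y1 n \<longleftrightarrow> X2 n < Y2 n" using Suc.IH[rule_format, of 0 0] by simp
    show ?case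
    proof (cases "X1 n < Y1 n")
      case True
      then have T2: "X2 n < Y2 n" using e1 by simp
      have s1: "X1 (Suc n) = A" "Y1 (Suc n) = Y1 n - X1 n" using c1 True unfolding clk_def by auto
      have s2: "X2 (Suc n) = A" "Y2 (Suc n) = Y2 n - X2 n" using c2 T2 unfolding clk_def by auto
      show ?thesis
      proof (intro allI)
        fix k l :: nat
        have "A + real k * A < Y1 n - X1 n + real l * B \<longleftrightarrow> X1 n + real (Suc k) * A < Y1 n + real l * B"
          by (simp add: algebra_simps)
        moreover have "A + real k * A < Y2 n - X2 n + real l * B \<longleftrightarrow> X2 n + real (Suc k) * A < Y2 n + real l * B"
          by (simp add: algebra_simps)
        ultimately show "X1 (Suc n) + real k * A < Y1 (Suc n) + real l * B \<longleftrightarrow> X2 (Suc n) + real k * A < Y2 (Suc n) + real l * B"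
          using Suc.IH[rule_format, of "Suc k" l] s1 s2 by simp
      qed
    next
      case False
      then have F2: "\<not> X2 n < Y2 n" using e1 by simp
      have s1: "X1 (Suc n) = X1 n - Y1 n" "Y1 (Suc n) = B" using c1 False unfolding clk_def by auto
      have s2: "X2 (Suc n) = X2 n - Y2 n" "Y2 (Suc n) = B" using c2 F2 unfolding clk_def by auto
      show ?thesis
      proof (intro allI)
        fix k l :: nat
        have "X1 n - Y1 n + real k * A < B + real l * B \<longleftrightarrow> X1 n + real k * A < Y1 n + real (Suc l) * B"
          by (simp add: algebra_simps)
        moreover have "X2 n - Y2 n + real k * A < B + real l * B \<longleftrightarrow> X2 n + real k * A < Y2 n + real (Suc l) * B"
          by (simp add: algebra_simps)
        ultimately show "X1 (Suc n) + real k * A < Y1 (Suc n) + real l * B \<longleftrightarrow> X2 (Suc n) + real k * A < Y2 (Suc n) + real l * B"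
          using Suc.IH[rule_format, of k "Suc l"] s1 s2 by simp
      qed
    qed
  qed
  then show ?thesis by (metis add.right_neutral mult_zero_left of_nat_0)
qed

lemma normal_order:
  assumes A: "A = real N * u" and B: "B = real M * u" and u: "u > 0" and X0: "X0 = A" and Y0: "0 < Y0" "Y0 < u"
  shows "X0 + real k * A < Y0 + real l * B \<longleftrightarrow> N * (Suc k) \<le> l * M"
proof
  assume h: "X0 + real k * A < Y0 + real l * B"
  show "N * (Suc k) \<le> l * M"
  proof (rule ccontr)
    assume "\<not> ?thesis"
    then have "l * M + 1 \<le> N * Suc k" by simp
    then have "real (l * M + 1) \<le> real (N * Suc k)" by (simp only: of_nat_le_iff)
    then have "(real l * real M + 1) * u \<le> real N * (real k + 1) * u" using u by (intro mult_right_mono) (auto simp: algebra_simps)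
    then show False using h u Y0 unfolding X0 A B by (simp add: algebra_simps)
  qed
next
  assume h: "N * (Suc k) \<le> l * M"
  then have "real (N * Suc k) \<le> real (l * M)" by (simp only: of_nat_le_iff)
  then have "real N * (real k + 1) * u \<le> real l * real M * u" using u by (intro mult_right_mono) (auto simp: algebra_simps)
  then show "X0 + real k * A < Y0 + real l * B" using u Y0 unfolding X0 A B by (simp add: algebra_simps)
qed


abbreviation orb where "orb w x k \<equiv> (billiard w ^^ k) x"

lemma orb_Suc: "orb w x (Suc k) = billiard w (orb w x k)" by simp

definition np :: "real \<Rightarrow> real \<times> real \<Rightarrow> bool" where
  "np w x \<longleftrightarrow> fst (dir w x) \<noteq> 0 \<and> snd (dir w x) \<noteq> 0"

lemma orbit_dir:
  assumes w: "w > 0" and reg: "\<And>n. regular w (orb w x n)" and np: "np w x"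
  shows "\<bar>fst (dir w (orb w x k))\<bar> = \<bar>fst (dir w x)\<bar> \<and> \<bar>snd (dir w (orb w x k))\<bar> = \<bar>snd (dir w x)\<bar>"
proof (induction k)
  case 0 then show ?case by simp
next
  case (Suc k)
  have ph: "orb w x k \<in> phase w" using reg regular_phase by blast
  have n: "fst (dir w (orb w x k)) \<noteq> 0" "snd (dir w (orb w x k)) \<noteq> 0" using Suc np unfolding np_def by auto
  have ne: "xi w (orb w x k) \<noteq> eta w (orb w x k)" using regular_neq[OF w reg n] .
  show ?case
  proof (cases "xi w (orb w x k) < eta w (orb w x k)")
    case True then show ?thesis using step_V[OF w ph n True] Suc by simp
  next
    case False then have "eta w (orb w x k) < xi w (orb w x k)" using ne by simp
    then show ?thesis using step_H[OF w ph n] Suc by simp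
  qed
qed

lemma orbit_np: "w > 0 \<Longrightarrow> (\<And>n. regular w (orb w x n)) \<Longrightarrow> np w x \<Longrightarrow> np w (orb w x k)"
  using orbit_dir[of w x k] unfolding np_def by auto

lemma orbit_step:
  assumes w: "w > 0" and reg: "\<And>n. regular w (orb w x n)" and np: "np w x"
  shows "0 < xi w (orb w x k) \<and> xi w (orb w x k) \<le> w / \<bar>fst (dir w x)\<bar>
    \<and> 0 < eta w (orb w x k) \<and> eta w (orb w x k) \<le> 1 / \<bar>snd (dir w x)\<bar>
    \<and> xi w (orb w x k) \<noteq> eta w (orb w x k)
    \<and> xi w (orb w x (Suc k)) = (if xi w (orb w x k) < eta w (orb w x k) then w / \<bar>fst (dir w x)\<bar> else xi w (orb w x k) - eta w (orb w x k))
    \<and> eta w (orb w x (Suc k)) = (if xi w (orb w x k) < eta w (orb w x k) then eta w (orb w x k) - xi w (orb w x k) else 1 / \<bar>snd (dir w x)\<bar>)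
    \<and> side_of w (fst (orb w x (Suc k))) = (if xi w (orb w x k) < eta w (orb w x k)
         then (if fst (dir w (orb w x k)) > 0 then 1 else 3) else (if snd (dir w (orb w x k)) > 0 then 2 else 0))
    \<and> dir w (orb w x (Suc k)) = (if xi w (orb w x k) < eta w (orb w x k)
         then (- fst (dir w (orb w x k)), snd (dir w (orb w x k))) else (fst (dir w (orb w x k)), - snd (dir w (orb w x k))))"
proof -
  have ph: "orb w x k \<in> phase w" using reg regular_phase by blast
  have n: "fst (dir w (orb w x k)) \<noteq> 0" "snd (dir w (orb w x k)) \<noteq> 0"
    using orbit_np[OF w reg np, of k] unfolding np_def by auto
  have ne: "xi w (orb w x k) \<noteq> eta w (orb w x k)" using regular_neq[OF w reg n] .
  have d: "\<bar>fst (dir w (orb w x k))\<bar> = \<bar>fst (dir w x)\<bar>" "\<bar>snd (dir w (orb w x k))\<bar> = \<bar>snd (dir w x)\<bar>"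
    using orbit_dir[OF w reg np] by auto
  have b: "0 < xi w (orb w x k) \<and> xi w (orb w x k) \<le> w / \<bar>fst (dir w x)\<bar>
    \<and> 0 < eta w (orb w x k) \<and> eta w (orb w x k) \<le> 1 / \<bar>snd (dir w x)\<bar>"
    using xi_bounds[OF w ph n] d by simp
  show ?thesis
  proof (cases "xi w (orb w x k) < eta w (orb w x k)")
    case True then show ?thesis using step_V[OF w ph n True] b ne d by simp
  next
    case False then have "eta w (orb w x k) < xi w (orb w x k)" using ne by simp
    then show ?thesis using step_H[OF w ph n] b ne d False by simp
  qed
qed

definition XX where "XX w x k = xi w (orb w x k)"
definition YY where "YY w x k = eta w (orb w x k)"

lemma orbit_clk:
  assumes w: "w > 0" and reg: "\<And>n. regular w (orb w x n)" and np: "np w x"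
  shows "clk (w / \<bar>fst (dir w x)\<bar>) (1 / \<bar>snd (dir w x)\<bar>) (XX w x) (YY w x)"
  unfolding clk_def XX_def YY_def using orbit_step[OF w reg np] by blast

lemma orbit_chi:
  assumes w: "w > 0" and reg: "\<And>n. regular w (orb w x n)" and np: "np w x"
  shows "chi (itin w (billiard w) x (Suc k)) = (if XX w x k < YY w x k then 1 else 0)"
  using orbit_step[OF w reg np, of k] unfolding itin_def chi_def XX_def YY_def by auto

lemma sum_chi_cv:
  assumes w: "w > 0" and reg: "\<And>n. regular w (orb w x n)" and np: "np w x"
  shows "(\<Sum>k<L. chi (itin w (billiard w) x (Suc k))) = real (cv (XX w x) (YY w x) L)"
  unfolding cv_def of_nat_sum using orbit_chi[OF w reg np] by (intro sum.cong) auto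

lemma geo_period:
  assumes w: "w > 0" and reg: "\<And>n. regular w (orb w x n)" and np: "np w x"
    and L: "orb w x L = x" "L > 0"
  shows "w / \<bar>fst (dir w x)\<bar> * real (cv (XX w x) (YY w x) L) = 1 / \<bar>snd (dir w x)\<bar> * real (L - cv (XX w x) (YY w x) L)"
    "cv (XX w x) (YY w x) L > 0" "cv (XX w x) (YY w x) L < L"
proof -
  note c = orbit_clk[OF w reg np]
  have p: "XX w x L = XX w x 0" "YY w x L = YY w x 0" unfolding XX_def YY_def using L by auto
  note P = clk_period[OF c p L(2)]
  show "w / \<bar>fst (dir w x)\<bar> * real (cv (XX w x) (YY w x) L) = 1 / \<bar>snd (dir w x)\<bar> * real (L - cv (XX w x) (YY w x) L)"
    using P(1) .
  show "cv (XX w x) (YY w x) L > 0" using P(2) by (metis mult_zero_right of_nat_0 less_irrefl neq0_conv)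
  have "1 / \<bar>snd (dir w x)\<bar> * real (L - cv (XX w x) (YY w x) L) > 0" using P(1) P(2) by linarith
  then have "real (L - cv (XX w x) (YY w x) L) \<noteq> 0" by force
  then have "L - cv (XX w x) (YY w x) L > 0" by simp
  then show "cv (XX w x) (YY w x) L < L" by simp
qed


lemma stable_rel:
  assumes w: "w > 0" and st: "lam_plus_stable w q" and np: "np w q"
    and L: "orb w q L = q" "L > 0"
  shows "w = real (L - cv (XX w q) (YY w q) L) / real (cv (XX w q) (YY w q) L) *
            cot (pi * real (L - cv (XX w q) (YY w q) L) / (2 * real ((L - cv (XX w q) (YY w q) L) + cv (XX w q) (YY w q) L)))"
    "\<bar>snd (dir w q)\<bar> / \<bar>fst (dir w q)\<bar> = real (L - cv (XX w q) (YY w q) L) / (real (cv (XX w q) (YY w q) L) * w)"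
proof -
  have reg: "\<And>n. regular w (orb w q n)" using st unfolding lam_plus_stable_def periodic_pt_def by blast
  define V where "V = cv (XX w q) (YY w q) L"
  define H where "H = L - V"
  have GP: "w / \<bar>fst (dir w q)\<bar> * real V = 1 / \<bar>snd (dir w q)\<bar> * real H" "V > 0" "V < L"
    using geo_period[OF w reg np L] unfolding V_def H_def by auto
  have HL: "H + V = L" "H > 0" using GP unfolding H_def by auto
  have lr: "beta w q * real L = (pi/2) * real V"
    using lam_relation[OF st L] sum_chi_cv[OF w reg np, of L] unfolding V_def by simp
  have ph: "q \<in> phase w" using reg[of 0] regular_phase by simp
  define a where "a = \<bar>fst (dir w q)\<bar>"
  define b where "b = \<bar>snd (dir w q)\<bar>"
  have ab: "a = sin (beta w q)" "b = cos (beta w q)" using beta_dir[OF ph] unfolding a_def b_def by auto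
  have a0: "a > 0" "b > 0" using np unfolding np_def a_def b_def by auto
  have be: "beta w q = pi * real V / (2 * real L)" using lr HL by (simp add: field_simps)
  have ang: "pi * real H / (2 * real (H + V)) = pi/2 - beta w q"
  proof -
    have "pi * real H / (2 * real L) + pi * real V / (2 * real L) = pi * (real H + real V) / (2 * real L)"
      by (simp add: add_divide_distrib[symmetric] distrib_left)
    also have "real H + real V = real L" using HL by (metis of_nat_add)
    also have "pi * real L / (2 * real L) = pi/2" using HL by simp
    finally show ?thesis using be HL by simp
  qed
  have cs1: "cos (pi/2 - beta w q) = sin (beta w q)" using sin_cos_eq[of "beta w q"] by simp
  have cs2: "sin (pi/2 - beta w q) = cos (beta w q)" using cos_sin_eq[of "beta w q"] by simp
  have ct: "cot (pi * real H / (2 * real (H + V))) = a / b" unfolding ang cot_def cs1 cs2 ab ..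
  have key: "w * real V * b = real H * a"
  proof -
    have "w / a * real V = 1 / b * real H" using GP(1) unfolding a_def b_def .
    then have "(w / a * real V) * (a * b) = (1 / b * real H) * (a * b)" by simp
    then show ?thesis using a0 by (simp add: field_simps)
  qed
  have V0: "real V > 0" using GP by simp
  show "w = real (L - cv (XX w q) (YY w q) L) / real (cv (XX w q) (YY w q) L) *
            cot (pi * real (L - cv (XX w q) (YY w q) L) / (2 * real ((L - cv (XX w q) (YY w q) L) + cv (XX w q) (YY w q) L)))"
    unfolding V_def[symmetric] H_def[symmetric] ct using key a0 V0 by (simp add: field_simps)
  show "\<bar>snd (dir w q)\<bar> / \<bar>fst (dir w q)\<bar> = real (L - cv (XX w q) (YY w q) L) / (real (cv (XX w q) (YY w q) L) * w)"
    unfolding V_def[symmetric] H_def[symmetric] a_def[symmetric] b_def[symmetric] using key a0 V0 w by (simp add: field_simps)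
qed


lemma itin_shift: "itin w f ((f ^^ k) z) n = itin w f z (n + k)"
  unfolding itin_def by (simp add: funpow_add)

lemma itin_shift_fun: "itin w f ((f ^^ k) z) = (\<lambda>n. itin w f z (n + k))"
  using itin_shift by blast

lemma funpow_period: "(f ^^ L) z = z \<Longrightarrow> (f ^^ (t * L)) z = z"
proof (induction t)
  case (Suc t)
  have "(f ^^ (Suc t * L)) z = (f ^^ L) ((f ^^ (t * L)) z)" by (simp add: funpow_add add.commute)
  then show ?case using Suc by simp
qed simp

lemma periodic_orb: "periodic_pt w f z \<Longrightarrow> periodic_pt w f ((f ^^ k) z)"
proof -
  assume p: "periodic_pt w f z"
  then obtain L where L: "L > 0" "(f ^^ L) z = z" and r: "\<And>n. regular w ((f ^^ n) z)"
    unfolding periodic_pt_def by blast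
  have "(f ^^ L) ((f ^^ k) z) = (f ^^ k) ((f ^^ L) z)" by (metis funpow_add comp_apply add.commute)
  then have "(f ^^ L) ((f ^^ k) z) = (f ^^ k) z" using L by simp
  moreover have "regular w ((f ^^ n) ((f ^^ k) z))" for n using r[of "n + k"] by (simp add: funpow_add)
  ultimately show ?thesis unfolding periodic_pt_def using L by blast
qed

lemma cyl_half:
  assumes p1: "periodic_pt w (billiard w) x1"
    and e: "itin w (billiard w) (orb w x1 m1) = itin w (billiard w) (orb w x2 m2)"
  shows "\<exists>k'. itin w (billiard w) (orb w x1 k) = itin w (billiard w) (orb w x2 k')"
proof -
  obtain L where L: "L > 0" "orb w x1 L = x1" using p1 unfolding periodic_pt_def by blast
  have "orb w x1 (k + m1 * L) = orb w x1 k"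
    using funpow_period[where f="billiard w" and L=L and z=x1 and t=m1] L by (simp add: funpow_add)
  moreover have km: "k + m1 * L \<ge> m1"
  proof -
    have "m1 * 1 \<le> m1 * L" using L by (intro mult_le_mono2) simp
    then show ?thesis by linarith
  qed
  define d where "d = k + m1 * L - m1"
  have "itin w (billiard w) (orb w x1 (k + m1 * L)) = itin w (billiard w) (orb w x2 (m2 + d))"
  proof
    fix n
    have "itin w (billiard w) (orb w x1 (k + m1 * L)) n = itin w (billiard w) x1 (n + d + m1)"
      unfolding itin_shift d_def using km by (simp add: algebra_simps)
    also have "\<dots> = itin w (billiard w) (orb w x1 m1) (n + d)" unfolding itin_shift ..
    also have "\<dots> = itin w (billiard w) (orb w x2 m2) (n + d)" using e by simp
    also have "\<dots> = itin w (billiard w) (orb w x2 (m2 + d)) n" unfolding itin_shift by (simp add: algebra_simps)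
    finally show "itin w (billiard w) (orb w x1 (k + m1 * L)) n = itin w (billiard w) (orb w x2 (m2 + d)) n" .
  qed
  ultimately show ?thesis by auto
qed

lemma cyl_eq:
  assumes p1: "periodic_pt w (billiard w) x1" and p2: "periodic_pt w (billiard w) x2"
    and e: "itin w (billiard w) (orb w x1 m1) = itin w (billiard w) (orb w x2 m2)"
  shows "cyl w x1 = cyl w x2"
proof -
  have a: "\<And>k. \<exists>k'. itin w (billiard w) (orb w x1 k) = itin w (billiard w) (orb w x2 k')"
    using cyl_half[OF p1 e] by blast
  have b: "\<And>k. \<exists>k'. itin w (billiard w) (orb w x2 k) = itin w (billiard w) (orb w x1 k')"
    using cyl_half[OF p2 e[symmetric]] by blast
  show ?thesis unfolding cyl_def
  proof (intro Collect_cong iffI; elim conjE; intro conjI)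
    fix x assume "periodic_pt w (billiard w) x" "\<exists>k. itin w (billiard w) x = itin w (billiard w) (orb w x1 k)"
    then show "\<exists>k. itin w (billiard w) x = itin w (billiard w) (orb w x2 k)" using a by metis
  next
    fix x assume "periodic_pt w (billiard w) x" "\<exists>k. itin w (billiard w) x = itin w (billiard w) (orb w x2 k)"
    then show "\<exists>k. itin w (billiard w) x = itin w (billiard w) (orb w x1 k)" using b by metis
  qed auto
qed

lemma mem_cyl: "x \<in> cyl w q0 \<Longrightarrow> periodic_pt w (billiard w) q0 \<Longrightarrow> cyl w x = cyl w q0"
proof -
  assume x: "x \<in> cyl w q0" and p: "periodic_pt w (billiard w) q0"
  then obtain k where k: "periodic_pt w (billiard w) x" "itin w (billiard w) x = itin w (billiard w) (orb w q0 k)"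
    unfolding cyl_def by blast
  show ?thesis by (rule cyl_eq[OF k(1) p, of 0 k]) (use k in simp)
qed

lemma self_cyl: "periodic_pt w (billiard w) q \<Longrightarrow> q \<in> cyl w q"
  unfolding cyl_def by (auto intro!: exI[of _ 0])

lemma window_sum:
  fixes f :: "nat \<Rightarrow> real"
  assumes "\<And>n. f (n + K) = f n"
  shows "(\<Sum>k<K. f (k + m)) = (\<Sum>k<K. f k)"
proof (induction m)
  case (Suc m)
  have "(\<Sum>k<K. f (k + Suc m)) = (\<Sum>k<Suc K. f (k + m)) - f m"
    by (simp add: sum.lessThan_Suc_shift del: sum.lessThan_Suc)
  also have "\<dots> = (\<Sum>k<K. f (k + m)) + f (K + m) - f m" by simp
  also have "f (K + m) = f m" using assms[of m] by (simp add: add.commute)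
  finally show ?case using Suc by simp
qed simp


lemma pp_hit:
  assumes w: "w > 0" and z: "z \<in> phase w" and t: "snd z = 0"
  shows "hit_pt w z = (if side_of w (fst z) = 0 then (fst z, 1) else if side_of w (fst z) = 1 then (0, fst z - w)
      else if side_of w (fst z) = 2 then (2*w+1 - fst z, 0) else (w, 2*w+2 - fst z))"
  using phase_side[OF w z] w t
  by (elim disjE) (auto simp: hit_pt_def exit_time_def dir_side Let_def)

lemma pp_step:
  assumes w: "w > 0" and z: "z \<in> phase w" and t: "snd z = 0"
  shows "billiard w z = (if side_of w (fst z) = 0 \<or> side_of w (fst z) = 2 then 2*w+1 - fst z else 3*w+2 - fst z, 0)
    \<and> side_of w (fst (billiard w z)) = (side_of w (fst z) + 2) mod 4
    \<and> billiard w z \<in> phase w \<and> \<not> is_corner_pt w (hit_pt w z)"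
proof -
  note h = pp_hit[OF w z t]
  have d: "dir w z = nrm (side_of w (fst z))" unfolding dir_side nrm_def Let_def t by simp
  show ?thesis
    using phase_side[OF w z] w t h
    apply (elim disjE)
    apply (auto simp: billiard_def d Let_def arclen_def nrm_def is_corner_pt_def phase_def is_corner_s_def)
    apply (auto simp: side_of_def)
    done
qed


lemma pp_orbit:
  assumes w: "w > 0" and z: "z \<in> phase w" and t: "snd z = 0"
  shows "orb w z n \<in> phase w \<and> snd (orb w z n) = 0 \<and> regular w (orb w z n)
     \<and> side_of w (fst (orb w z n)) = (side_of w (fst z) + 2 * n) mod 4"
proof (induction n)
  case 0 then show ?case using pp_step[OF w z t] z t side_of_cases[of w "fst z"] unfolding regular_def by auto
next
  case (Suc n)
  define y where "y = orb w z n"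
  have ph: "y \<in> phase w" "snd y = 0" using Suc unfolding y_def by auto
  have h: "side_of w (fst y) = (side_of w (fst z) + 2 * n) mod 4" using Suc unfolding y_def by blast
  note S = pp_step[OF w ph]
  have P1: "billiard w y \<in> phase w" using S by blast
  have P2: "snd (billiard w y) = 0" using S by (metis prod.sel(2))
  note S2 = pp_step[OF w P1 P2]
  have P3: "\<not> is_corner_pt w (hit_pt w (billiard w y))" using S2 by blast
  have "side_of w (fst (billiard w y)) = (side_of w (fst y) + 2) mod 4" using S by blast
  also have "\<dots> = (side_of w (fst z) + 2 * Suc n) mod 4" unfolding h by presburger
  finally have P4: "side_of w (fst (billiard w y)) = (side_of w (fst z) + 2 * Suc n) mod 4" .
  have eq: "orb w z (Suc n) = billiard w y" unfolding y_def by simp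
  show ?case unfolding eq regular_def using P1 P2 P3 P4 by blast
qed

lemma pp_two:
  assumes w: "w > 0" and z: "z \<in> phase w" and t: "snd z = 0"
  shows "orb w z 2 = z"
proof -
  note S = pp_step[OF w z t]
  have ph: "billiard w z \<in> phase w" "snd (billiard w z) = 0" using S by auto
  note S2 = pp_step[OF w ph]
  have sd: "side_of w (fst z) \<in> {0,1,2,3}" by (rule side_of_cases)
  have e1: "billiard w z = (if side_of w (fst z) = 0 \<or> side_of w (fst z) = 2 then 2*w+1 - fst z else 3*w+2 - fst z, 0)"
    using S by blast
  have s1: "side_of w (fst (billiard w z)) = (side_of w (fst z) + 2) mod 4" using S by blast
  have e2: "billiard w (billiard w z) = (if side_of w (fst (billiard w z)) = 0 \<or> side_of w (fst (billiard w z)) = 2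
      then 2*w+1 - fst (billiard w z) else 3*w+2 - fst (billiard w z), 0)"
    using S2 by blast
  have "billiard w (billiard w z) = z"
  proof (cases "side_of w (fst z) = 0 \<or> side_of w (fst z) = 2")
    case True
    then have "side_of w (fst (billiard w z)) = 0 \<or> side_of w (fst (billiard w z)) = 2" using s1 by auto
    then show ?thesis using e2 e1 True t by (cases z) simp
  next
    case False
    then have "\<not> (side_of w (fst (billiard w z)) = 0 \<or> side_of w (fst (billiard w z)) = 2)" using s1 sd by auto
    then show ?thesis using e2 e1 False t by (cases z) simp
  qed
  then show ?thesis by (simp add: numeral_eq_Suc)
qed

lemma pp_periodic:
  assumes w: "w > 0" and z: "z \<in> phase w" and t: "snd z = 0"
  shows "periodic_pt w (billiard w) z"
  unfolding periodic_pt_def using pp_orbit[OF w z t] pp_two[OF w z t] by (auto intro!: exI[of _ 2])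

lemma pp_itin:
  assumes w: "w > 0" and z: "z \<in> phase w" and t: "snd z = 0"
  shows "itin w (billiard w) z n = (side_of w (fst z) + 2 * n) mod 4"
  unfolding itin_def using pp_orbit[OF w z t] by blast

lemma pp_lam:
  assumes w: "w > 0" and z: "z \<in> phase w" and t: "snd z = 0"
  shows "(billiard_lam w l ^^ n) z = orb w z n"
proof (induction n)
  case (Suc n)
  have "snd (billiard w (orb w z n)) = 0" using pp_orbit[OF w z t, of "Suc n"] by simp
  then show ?case using Suc unfolding billiard_lam_def R_lam_def by (cases "billiard w (orb w z n)") simp
qed simp

lemma pp_lam_periodic:
  assumes w: "w > 0" and z: "z \<in> phase w" and t: "snd z = 0"
  shows "periodic_pt w (billiard_lam w l) z \<and> itin w (billiard_lam w l) z = itin w (billiard w) z"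
  using pp_periodic[OF w z t] unfolding periodic_pt_def itin_def pp_lam[OF w z t] by simp

lemma pp_plus:
  assumes w: "w > 0" and z: "z \<in> phase w" and t: "snd z = 0"
  shows "lam_plus_stable w z"
proof -
  define lam where "lam n = 1 + 1 / (real n + 1)" for n
  have "\<forall>n. lam (Suc n) < lam n" unfolding lam_def by (simp add: frac_less2)
  moreover have "lam \<longlonglongrightarrow> 1"
  proof -
    have "(\<lambda>n. 1 / (real n + 1)) \<longlonglongrightarrow> 0" using LIMSEQ_inverse_real_of_nat by (simp add: inverse_eq_divide add.commute)
    then have "(\<lambda>n. 1 + 1 / (real n + 1)) \<longlonglongrightarrow> 1 + 0" by (intro tendsto_add) auto
    then show ?thesis unfolding lam_def by simp
  qed
  ultimately show ?thesis unfolding lam_plus_stable_def using pp_periodic[OF w z t] pp_lam_periodic[OF w z t]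
    by (intro conjI exI[of _ lam] exI[of _ "\<lambda>n. z"]) auto
qed

lemma pp_minus:
  assumes w: "w > 0" and z: "z \<in> phase w" and t: "snd z = 0"
  shows "lam_minus_stable w z"
proof -
  define lam where "lam n = 1 - 1 / (real n + 2)" for n
  have "\<forall>n. lam n < lam (Suc n)" unfolding lam_def by (simp add: frac_less2)
  moreover have "\<forall>n. lam n > 0" unfolding lam_def by simp
  moreover have "lam \<longlonglongrightarrow> 1"
  proof -
    have "(\<lambda>n. 1 / (real (Suc n) + 1)) \<longlonglongrightarrow> 0"
      using LIMSEQ_inverse_real_of_nat[THEN LIMSEQ_Suc] by (simp add: inverse_eq_divide add.commute)
    then have "(\<lambda>n. 1 - 1 / (real (Suc n) + 1)) \<longlonglongrightarrow> 1 - 0" by (intro tendsto_diff) auto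
    then show ?thesis unfolding lam_def by (simp add: add.commute)
  qed
  ultimately show ?thesis unfolding lam_minus_stable_def using pp_periodic[OF w z t] pp_lam_periodic[OF w z t]
    by (intro conjI exI[of _ lam] exI[of _ "\<lambda>n. z"]) auto
qed

lemma pp_stable:
  assumes w: "w > 0" and C: "is_pingpong_cyl w C"
  shows "lam_stable_cyl w C"
proof -
  obtain q where q: "periodic_pt w (billiard w) q" "snd q = 0" "C = cyl w q"
    using C unfolding is_pingpong_cyl_def by blast
  have ph: "q \<in> phase w" using q(1) unfolding periodic_pt_def regular_def by (metis funpow_0)
  show ?thesis unfolding lam_stable_cyl_def is_cyl_def
    using q self_cyl[OF q(1)] pp_plus[OF w ph q(2)] pp_minus[OF w ph q(2)] by blast
qed

definition qa :: "real \<Rightarrow> real \<times> real" where "qa w = (w / 2, 0)"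
definition qb :: "real \<Rightarrow> real \<times> real" where "qb w = (w + 1/2, 0)"

lemma qa_facts: "w > 0 \<Longrightarrow> qa w \<in> phase w \<and> snd (qa w) = 0 \<and> side_of w (fst (qa w)) = 0"
  unfolding qa_def phase_def is_corner_s_def side_of_def by auto

lemma qb_facts: "w > 0 \<Longrightarrow> qb w \<in> phase w \<and> snd (qb w) = 0 \<and> side_of w (fst (qb w)) = 1"
  unfolding qb_def phase_def is_corner_s_def side_of_def by auto

lemma pp_classify:
  assumes w: "w > 0"
  shows "is_pingpong_cyl w C \<longleftrightarrow> C = cyl w (qa w) \<or> C = cyl w (qb w)"
proof
  note A = qa_facts[OF w] and B = qb_facts[OF w]
  have pa: "periodic_pt w (billiard w) (qa w)" using pp_periodic[OF w] A by blast
  have pb: "periodic_pt w (billiard w) (qb w)" using pp_periodic[OF w] B by blast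
  {
    assume "is_pingpong_cyl w C"
    then obtain q where q: "periodic_pt w (billiard w) q" "snd q = 0" "C = cyl w q"
      unfolding is_pingpong_cyl_def by blast
    have ph: "q \<in> phase w" using q(1) unfolding periodic_pt_def regular_def by (metis funpow_0)
    have it: "itin w (billiard w) q n = (side_of w (fst q) + 2 * n) mod 4" for n using pp_itin[OF w ph q(2)] .
    have ia: "itin w (billiard w) (orb w (qa w) k) n = (2 * k + 2 * n) mod 4" for k n
      unfolding itin_shift using pp_itin[OF w] A by (simp add: algebra_simps)
    have ib: "itin w (billiard w) (orb w (qb w) k) n = (1 + 2 * k + 2 * n) mod 4" for k n
      unfolding itin_shift using pp_itin[OF w] B by (simp add: algebra_simps)
    have sd: "side_of w (fst q) \<in> {0,1,2,3}" by (rule side_of_cases)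
    then consider "side_of w (fst q) = 0" | "side_of w (fst q) = 1" | "side_of w (fst q) = 2" | "side_of w (fst q) = 3" by auto
    then show "C = cyl w (qa w) \<or> C = cyl w (qb w)"
    proof cases
      case 1
      have "itin w (billiard w) (orb w q 0) = itin w (billiard w) (orb w (qa w) 0)"
      proof (rule ext)
        fix n show "itin w (billiard w) (orb w q 0) n = itin w (billiard w) (orb w (qa w) 0) n"
          using it[of n] ia[of 0 n] 1 by (simp add: algebra_simps)
      qed
      then show ?thesis using cyl_eq[OF q(1) pa] q(3) by blast
    next
      case 2
      have "itin w (billiard w) (orb w q 0) = itin w (billiard w) (orb w (qb w) 0)"
      proof (rule ext)
        fix n show "itin w (billiard w) (orb w q 0) n = itin w (billiard w) (orb w (qb w) 0) n"
          using it[of n] ib[of 0 n] 2 by (simp add: algebra_simps)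
      qed
      then show ?thesis using cyl_eq[OF q(1) pb] q(3) by blast
    next
      case 3
      have "itin w (billiard w) (orb w q 0) = itin w (billiard w) (orb w (qa w) 1)"
      proof (rule ext)
        fix n show "itin w (billiard w) (orb w q 0) n = itin w (billiard w) (orb w (qa w) 1) n"
          using it[of n] ia[of 1 n] 3 by (simp add: algebra_simps)
      qed
      then show ?thesis using cyl_eq[OF q(1) pa] q(3) by blast
    next
      case 4
      have "itin w (billiard w) (orb w q 0) = itin w (billiard w) (orb w (qb w) 1)"
      proof (rule ext)
        fix n show "itin w (billiard w) (orb w q 0) n = itin w (billiard w) (orb w (qb w) 1) n"
          using it[of n] ib[of 1 n] 4 by (simp add: algebra_simps)
      qed
      then show ?thesis using cyl_eq[OF q(1) pb] q(3) by blast
    qed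
  }
  {
    assume "C = cyl w (qa w) \<or> C = cyl w (qb w)"
    then show "is_pingpong_cyl w C" unfolding is_pingpong_cyl_def using pa pb A B by blast
  }
qed

lemma pp_distinct:
  assumes w: "w > 0"
  shows "cyl w (qa w) \<noteq> cyl w (qb w)"
proof
  note A = qa_facts[OF w] and B = qb_facts[OF w]
  have pa: "periodic_pt w (billiard w) (qa w)" using pp_periodic[OF w] A by blast
  assume e: "cyl w (qa w) = cyl w (qb w)"
  then have "qa w \<in> cyl w (qb w)" using self_cyl[OF pa] by simp
  then obtain k where k: "itin w (billiard w) (qa w) = itin w (billiard w) (orb w (qb w) k)"
    unfolding cyl_def by blast
  have "itin w (billiard w) (qa w) 0 = 0" using pp_itin[OF w] A by simp
  moreover have "itin w (billiard w) (orb w (qb w) k) 0 = (1 + 2 * k) mod 4"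
    unfolding itin_shift using pp_itin[OF w] B by simp
  moreover have "(1 + 2 * k) mod 4 \<noteq> (0::nat)" by presburger
  ultimately show False using k by simp
qed

lemma pp_card:
  assumes w: "w > 0"
  shows "card {C. is_pingpong_cyl w C} = 2"
proof -
  have "{C. is_pingpong_cyl w C} = {cyl w (qa w), cyl w (qb w)}" using pp_classify[OF w] by blast
  then show ?thesis using pp_distinct[OF w] by simp
qed


lemma not_np_pp:
  assumes z: "z \<in> phase w" and n: "\<not> np w z"
  shows "snd z = 0"
proof -
  have t: "\<bar>snd z\<bar> < pi/2" using z unfolding phase_def by simp
  have c: "cos (snd z) > 0" using cos_pos_phase[OF z] .
  have h: "- (pi/2) < snd z" "snd z < pi/2" using t by (simp_all add: abs_less_iff)
  have h2: "- pi < snd z" "snd z < pi" using h pi_gt_zero by linarith+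
  have s: "sin (snd z) = 0 \<Longrightarrow> snd z = 0" using h2 sin_eq_0_pi by blast
  have i: "side_of w (fst z) \<in> {0,1,2,3}" by (rule side_of_cases)
  have d: "fst (dir w z) = 0 \<or> snd (dir w z) = 0" using n unfolding np_def by blast
  have "sin (snd z) = 0"
  proof -
    from i consider "side_of w (fst z) = 0" | "side_of w (fst z) = 1" | "side_of w (fst z) = 2" | "side_of w (fst z) = 3" by auto
    then show ?thesis
    proof cases
      case 1 then have "dir w z = (- sin (snd z), cos (snd z))" unfolding dir_side Let_def by simp
      then show ?thesis using d c by auto
    next
      case 2 then have "dir w z = (- cos (snd z), - sin (snd z))" unfolding dir_side Let_def by simp
      then show ?thesis using d c by auto
    next
      case 3 then have "dir w z = (sin (snd z), - cos (snd z))" unfolding dir_side Let_def by simp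
      then show ?thesis using d c by auto
    next
      case 4 then have "dir w z = (cos (snd z), sin (snd z))" unfolding dir_side Let_def by simp
      then show ?thesis using d c by auto
    qed
  qed
  then show ?thesis using s by simp
qed

lemma periodic_phase: "periodic_pt w f x \<Longrightarrow> x \<in> phase w"
  unfolding periodic_pt_def regular_def by (metis funpow_0)

lemma stable_np:
  assumes w: "w > 0" and C: "lam_stable_cyl w C" "\<not> is_pingpong_cyl w C" and x: "x \<in> C"
  shows "periodic_pt w (billiard w) x \<and> np w x \<and> cyl w x = C"
proof -
  obtain q0 where q0: "periodic_pt w (billiard w) q0" "C = cyl w q0"
    using C(1) unfolding lam_stable_cyl_def is_cyl_def by blast
  have px: "periodic_pt w (billiard w) x" using x q0 unfolding cyl_def by blast
  have cx: "cyl w x = C" using mem_cyl[of x w q0] x q0 by simp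
  have "np w x"
  proof (rule ccontr)
    assume "\<not> np w x"
    then have "snd x = 0" using not_np_pp periodic_phase[OF px] by blast
    then have "is_pingpong_cyl w C" unfolding is_pingpong_cyl_def using px cx by blast
    then show False using C(2) by simp
  qed
  then show ?thesis using px cx by simp
qed

lemma partC:
  assumes w: "w > 0" and C: "lam_stable_cyl w C" "\<not> is_pingpong_cyl w C"
  shows "\<exists>p q :: nat. p > 0 \<and> q > 0 \<and> w = real p / real q * cot (pi * real p / (2 * real (p + q)))"
proof -
  obtain q where q: "q \<in> C" "lam_plus_stable w q" using C(1) unfolding lam_stable_cyl_def by blast
  have S: "periodic_pt w (billiard w) q" "np w q" using stable_np[OF w C q(1)] by auto
  obtain L where L: "L > 0" "orb w q L = q" using S(1) unfolding periodic_pt_def by blast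
  have reg: "\<And>n. regular w (orb w q n)" using S(1) unfolding periodic_pt_def by blast
  note G = geo_period[OF w reg S(2) L(2,1)]
  note R = stable_rel[OF w q(2) S(2) L(2,1)]
  show ?thesis using R(1) G(2,3) by (intro exI[of _ "L - cv (XX w q) (YY w q) L"] exI[of _ "cv (XX w q) (YY w q) L"]) auto
qed

lemma partD_slope:
  assumes w: "w > 0" and C: "lam_stable_cyl w C" "\<not> is_pingpong_cyl w C" and x: "x \<in> C"
    and pq: "p > 0" "q > 0" "w = real p / real q * cot (pi * real p / (2 * real (p + q)))"
  shows "\<bar>snd (dir w x)\<bar> / \<bar>fst (dir w x)\<bar> = real p / (real q * w)"
proof -
  obtain s where s: "s \<in> C" "lam_plus_stable w s" using C(1) unfolding lam_stable_cyl_def by blast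
  have Ss: "periodic_pt w (billiard w) s" "np w s" using stable_np[OF w C s(1)] by auto
  have Sx: "periodic_pt w (billiard w) x" "np w x" "cyl w x = C" using stable_np[OF w C x] by auto
  obtain Ls where Ls: "Ls > 0" "orb w s Ls = s" using Ss(1) unfolding periodic_pt_def by blast
  obtain Lx where Lx: "Lx > 0" "orb w x Lx = x" using Sx(1) unfolding periodic_pt_def by blast
  define K where "K = Lx * Ls"
  have K0: "K > 0" unfolding K_def using Ls Lx by simp
  have Kx: "orb w x K = x" unfolding K_def using funpow_period[where f="billiard w" and L=Lx and z=x and t=Ls] Lx
    by (simp add: mult.commute)
  have Ks: "orb w s K = s" unfolding K_def using funpow_period[where f="billiard w" and L=Ls and z=s and t=Lx] Ls
    by simp
  have regs: "\<And>n. regular w (orb w s n)" using Ss(1) unfolding periodic_pt_def by blast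
  have regx: "\<And>n. regular w (orb w x n)" using Sx(1) unfolding periodic_pt_def by blast
  have "s \<in> cyl w x" using s(1) Sx(3) by simp
  then obtain k0 where k0: "itin w (billiard w) s = itin w (billiard w) (orb w x k0)" unfolding cyl_def by blast
  define f where "f j = chi (itin w (billiard w) x (Suc j))" for j
  have fp: "f (n + K) = f n" for n unfolding f_def using itin_period[OF Kx, of w "Suc n"] by simp
  have "real (cv (XX w s) (YY w s) K) = (\<Sum>k<K. chi (itin w (billiard w) s (Suc k)))"
    using sum_chi_cv[OF w regs Ss(2)] by simp
  also have "\<dots> = (\<Sum>k<K. f (k + k0))" unfolding k0 itin_shift f_def by simp
  also have "\<dots> = (\<Sum>k<K. f k)" by (rule window_sum[of f K, OF fp])
  also have "\<dots> = real (cv (XX w x) (YY w x) K)" unfolding f_def using sum_chi_cv[OF w regx Sx(2)] by simp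
  finally have VV: "cv (XX w s) (YY w s) K = cv (XX w x) (YY w x) K" by simp
  define V where "V = cv (XX w x) (YY w x) K"
  note R = stable_rel[OF w s(2) Ss(2) Ks K0]
  note Gs = geo_period[OF w regs Ss(2) Ks K0]
  note Gx = geo_period[OF w regx Sx(2) Kx K0]
  have HV: "K - V > 0" "V > 0" using Gx unfolding V_def by auto
  have "real (K - V) / real V = real p / real q"
    using ratio_unique[of "K - V" V p q] R(1) HV pq unfolding VV V_def[symmetric] by simp
  moreover have "\<bar>snd (dir w x)\<bar> / \<bar>fst (dir w x)\<bar> = real (K - V) / (real V * w)"
  proof -
    have e: "w / \<bar>fst (dir w x)\<bar> * real V = 1 / \<bar>snd (dir w x)\<bar> * real (K - V)" using Gx(1) unfolding V_def .
    have a0: "\<bar>fst (dir w x)\<bar> > 0" "\<bar>snd (dir w x)\<bar> > 0" using Sx(2) unfolding np_def by auto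
    show ?thesis using e a0 HV w by (simp add: field_simps)
  qed
  moreover have "real (K - V) / (real V * w) = (real (K - V) / real V) / w" by simp
  moreover have "real p / real q / w = real p / (real q * w)" by simp
  ultimately show ?thesis by metis
qed


lemma orbit_sign:
  assumes w: "w > 0" and reg: "\<And>n. regular w (orb w x n)" and np: "np w x"
  shows "fst (dir w (orb w x n)) = (-1)^(cv (XX w x) (YY w x) n) * fst (dir w x)
       \<and> snd (dir w (orb w x n)) = (-1)^(n - cv (XX w x) (YY w x) n) * snd (dir w x)"
proof (induction n)
  case 0 then show ?case by simp
next
  case (Suc n)
  note S = orbit_step[OF w reg np, of n]
  have c: "cv (XX w x) (YY w x) n \<le> n" by (rule cv_le)
  show ?case
  proof (cases "XX w x n < YY w x n")
    case True
    then have d: "dir w (orb w x (Suc n)) = (- fst (dir w (orb w x n)), snd (dir w (orb w x n)))"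
      using S unfolding XX_def YY_def by simp
    have "Suc n - cv (XX w x) (YY w x) (Suc n) = n - cv (XX w x) (YY w x) n" using True by (simp add: cv_Suc)
    then show ?thesis using d Suc True by (simp add: cv_Suc)
  next
    case False
    then have d: "dir w (orb w x (Suc n)) = (fst (dir w (orb w x n)), - snd (dir w (orb w x n)))"
      using S unfolding XX_def YY_def by simp
    have "Suc n - cv (XX w x) (YY w x) (Suc n) = Suc (n - cv (XX w x) (YY w x) n)" using False c by (simp add: cv_Suc Suc_diff_le)
    then show ?thesis using d Suc False by (simp add: cv_Suc)
  qed
qed

lemma same_itin:
  assumes w: "w > 0" and reg1: "\<And>n. regular w (orb w z1 n)" and reg2: "\<And>n. regular w (orb w z2 n)"
    and np1: "np w z1" and np2: "np w z2"
    and a: "\<bar>fst (dir w z2)\<bar> = \<bar>fst (dir w z1)\<bar>" "\<bar>snd (dir w z2)\<bar> = \<bar>snd (dir w z1)\<bar>"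
    and A: "w / \<bar>fst (dir w z1)\<bar> = real N * u" and B: "1 / \<bar>snd (dir w z1)\<bar> = real M * u" and u: "u > 0"
    and X1: "xi w z1 = w / \<bar>fst (dir w z1)\<bar>" and X2: "xi w z2 = w / \<bar>fst (dir w z1)\<bar>"
    and Y1: "0 < eta w z1" "eta w z1 < u" and Y2: "0 < eta w z2" "eta w z2 < u"
    and s1: "fst (dir w z1) > 0 \<longleftrightarrow> fst (dir w z2) > 0" and s2: "snd (dir w z1) > 0 \<longleftrightarrow> snd (dir w z2) > 0"
    and sd: "side_of w (fst z1) = side_of w (fst z2)"
  shows "itin w (billiard w) z1 = itin w (billiard w) z2"
proof -
  define AA where "AA = w / \<bar>fst (dir w z1)\<bar>"
  define BB where "BB = 1 / \<bar>snd (dir w z1)\<bar>"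
  have c1: "clk AA BB (XX w z1) (YY w z1)" using orbit_clk[OF w reg1 np1] unfolding AA_def BB_def .
  have c2: "clk AA BB (XX w z2) (YY w z2)" using orbit_clk[OF w reg2 np2] unfolding AA_def BB_def a .
  have o: "\<forall>k l::nat. (XX w z1 0 + real k * AA < YY w z1 0 + real l * BB \<longleftrightarrow> XX w z2 0 + real k * AA < YY w z2 0 + real l * BB)"
  proof (intro allI)
    fix k l :: nat
    have "XX w z1 0 + real k * AA < YY w z1 0 + real l * BB \<longleftrightarrow> N * Suc k \<le> l * M"
      by (rule normal_order[OF A[folded AA_def] B[folded BB_def] u]) (use X1 Y1 in \<open>auto simp: XX_def YY_def AA_def\<close>)
    moreover have "XX w z2 0 + real k * AA < YY w z2 0 + real l * BB \<longleftrightarrow> N * Suc k \<le> l * M"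
      by (rule normal_order[OF A[folded AA_def] B[folded BB_def] u]) (use X2 Y2 in \<open>auto simp: XX_def YY_def AA_def\<close>)
    ultimately show "XX w z1 0 + real k * AA < YY w z1 0 + real l * BB \<longleftrightarrow> XX w z2 0 + real k * AA < YY w z2 0 + real l * BB"
      by simp
  qed
  have ord: "XX w z1 n < YY w z1 n \<longleftrightarrow> XX w z2 n < YY w z2 n" for n
    by (rule order_same[OF c1 c2 o])
  have P: "side_of w (fst (orb w z1 n)) = side_of w (fst (orb w z2 n))
     \<and> (fst (dir w (orb w z1 n)) > 0 \<longleftrightarrow> fst (dir w (orb w z2 n)) > 0)
     \<and> (snd (dir w (orb w z1 n)) > 0 \<longleftrightarrow> snd (dir w (orb w z2 n)) > 0)" for n
  proof (induction n)
    case 0 then show ?case using sd s1 s2 by simp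
  next
    case (Suc n)
    note S1 = orbit_step[OF w reg1 np1, of n] and S2 = orbit_step[OF w reg2 np2, of n]
    have n1: "fst (dir w (orb w z1 n)) \<noteq> 0" "snd (dir w (orb w z1 n)) \<noteq> 0" using orbit_np[OF w reg1 np1, of n] unfolding np_def by auto
    have n2: "fst (dir w (orb w z2 n)) \<noteq> 0" "snd (dir w (orb w z2 n)) \<noteq> 0" using orbit_np[OF w reg2 np2, of n] unfolding np_def by auto
    have o: "xi w (orb w z1 n) < eta w (orb w z1 n) \<longleftrightarrow> xi w (orb w z2 n) < eta w (orb w z2 n)"
      using ord[of n] unfolding XX_def YY_def .
    show ?case
    proof (cases "xi w (orb w z1 n) < eta w (orb w z1 n)")
      case True
      then have T2: "xi w (orb w z2 n) < eta w (orb w z2 n)" using o by simp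
      show ?thesis using S1 S2 True T2 Suc n1 n2 by (auto simp del: funpow.simps)
    next
      case False
      then have F2: "\<not> xi w (orb w z2 n) < eta w (orb w z2 n)" using o by simp
      show ?thesis using S1 S2 False F2 Suc n1 n2 by (auto simp del: funpow.simps)
    qed
  qed
  show ?thesis unfolding itin_def using P by blast
qed


lemma normal_pt:
  assumes w: "w > 0" and reg: "\<And>n. regular w (orb w x n)" and np: "np w x"
    and A: "w / \<bar>fst (dir w x)\<bar> = real N * u" and B: "1 / \<bar>snd (dir w x)\<bar> = real M * u" and u: "u > 0"
    and NM: "N > 0" "M > 0" "coprime N M"
  shows "\<exists>j. xi w (orb w x (Suc j)) = w / \<bar>fst (dir w x)\<bar> \<and> 0 < eta w (orb w x (Suc j)) \<and> eta w (orb w x (Suc j)) < u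
     \<and> side_of w (fst (orb w x (Suc j))) = (if fst (dir w (orb w x (Suc j))) < 0 then 1 else 3)"
proof -
  obtain j where j: "XX w x j < YY w x j" "0 < YY w x (Suc j)" "YY w x (Suc j) < u"
    using normal_exists[OF orbit_clk[OF w reg np] A B u NM] by blast
  note S = orbit_step[OF w reg np, of j]
  have T: "xi w (orb w x j) < eta w (orb w x j)" using j(1) unfolding XX_def YY_def .
  have n: "fst (dir w (orb w x j)) \<noteq> 0" using orbit_np[OF w reg np, of j] unfolding np_def by auto
  have "xi w (orb w x (Suc j)) = w / \<bar>fst (dir w x)\<bar>" using S T by simp
  moreover have "side_of w (fst (orb w x (Suc j))) = (if fst (dir w (orb w x (Suc j))) < 0 then 1 else 3)"
    using S T n by (auto simp del: funpow.simps)
  ultimately show ?thesis using j(2,3) unfolding YY_def by blast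
qed

lemma flip_pt:
  assumes w: "w > 0" and reg: "\<And>n. regular w (orb w z n)" and np: "np w z"
    and A: "w / \<bar>fst (dir w z)\<bar> = real N * u" and B: "1 / \<bar>snd (dir w z)\<bar> = real M * u" and u: "u > 0"
    and NM: "N > 0" "M > 0" and X: "xi w z = w / \<bar>fst (dir w z)\<bar>" and Y: "0 < eta w z" "eta w z < u"
  shows "\<exists>j. xi w (orb w z (Suc j)) = w / \<bar>fst (dir w z)\<bar> \<and> eta w (orb w z (Suc j)) = eta w z
     \<and> fst (dir w (orb w z (Suc j))) = (-1)^M * fst (dir w z) \<and> snd (dir w (orb w z (Suc j))) = (-1)^N * snd (dir w z)
     \<and> side_of w (fst (orb w z (Suc j))) = (if fst (dir w (orb w z (Suc j))) < 0 then 1 else 3)"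
proof -
  have X0: "XX w z 0 = w / \<bar>fst (dir w z)\<bar>" using X unfolding XX_def by simp
  have Y0: "0 < YY w z 0" "YY w z 0 < u" using Y unfolding YY_def by auto
  obtain j where j: "XX w z j < YY w z j" "cv (XX w z) (YY w z) (Suc j) = M"
     "Suc j - cv (XX w z) (YY w z) (Suc j) = N" "YY w z (Suc j) = YY w z 0"
    using flip_exists[OF orbit_clk[OF w reg np] A B u NM X0 Y0] by blast
  note S = orbit_step[OF w reg np, of j]
  have T: "xi w (orb w z j) < eta w (orb w z j)" using j(1) unfolding XX_def YY_def .
  have n: "fst (dir w (orb w z j)) \<noteq> 0" using orbit_np[OF w reg np, of j] unfolding np_def by auto
  have "xi w (orb w z (Suc j)) = w / \<bar>fst (dir w z)\<bar>" using S T by simp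
  moreover have "side_of w (fst (orb w z (Suc j))) = (if fst (dir w (orb w z (Suc j))) < 0 then 1 else 3)"
    using S T n by (auto simp del: funpow.simps)
  moreover have "fst (dir w (orb w z (Suc j))) = (-1)^M * fst (dir w z) \<and> snd (dir w (orb w z (Suc j))) = (-1)^N * snd (dir w z)"
    using orbit_sign[OF w reg np, of "Suc j"] j(2,3) by simp
  moreover have "eta w (orb w z (Suc j)) = eta w z" using j(4) unfolding YY_def by simp
  ultimately show ?thesis by blast
qed

lemma bool_cls:
  fixes s1 t1 s2 t2 :: bool
  assumes "\<not> (even M \<and> even N)"
    "(if odd M \<and> odd N then (s1 \<longleftrightarrow> t1) else if odd M then t1 else s1) = (if odd M \<and> odd N then (s2 \<longleftrightarrow> t2) else if odd M then t2 else s2)"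
    "\<not> (s1 = s2 \<and> t1 = t2)"
  shows "(if even M then s1 else \<not> s1) = s2 \<and> (if even N then t1 else \<not> t1) = t2"
  using assms by (cases "even M"; cases "even N") auto

lemma coprime_not_both_even: "coprime (N::nat) M \<Longrightarrow> \<not> (even N \<and> even M)"
  using coprime_common_divisor[of N M 2] by auto


lemma partD_count:
  assumes w: "w > 0" and pq: "p > 0" "q > 0" "w = real p / real q * cot (pi * real p / (2 * real (p + q)))"
  shows "finite {C. lam_stable_cyl w C \<and> \<not> is_pingpong_cyl w C} \<and> card {C. lam_stable_cyl w C \<and> \<not> is_pingpong_cyl w C} \<le> 2"
proof -
  define S where "S = {C. lam_stable_cyl w C \<and> \<not> is_pingpong_cyl w C}"
  define \<rho> where "\<rho> = real p / (real q * w)"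
  have r0: "\<rho> > 0" unfolding \<rho>_def using pq(1,2) w by simp
  define a where "a = sqrt (1 / (1 + \<rho>^2))"
  have a0: "a > 0" unfolding a_def using r0 by (simp add: add_pos_nonneg)
  have dirfix: "\<bar>fst (dir w x)\<bar> = a \<and> \<bar>snd (dir w x)\<bar> = \<rho> * a" if C: "C \<in> S" "x \<in> C" for C x
  proof -
    have CC: "lam_stable_cyl w C" "\<not> is_pingpong_cyl w C" using C unfolding S_def by auto
    have sl: "\<bar>snd (dir w x)\<bar> / \<bar>fst (dir w x)\<bar> = \<rho>" using partD_slope[OF w CC C(2) pq] unfolding \<rho>_def .
    have np: "np w x" using stable_np[OF w CC C(2)] by simp
    have f0: "\<bar>fst (dir w x)\<bar> > 0" using np unfolding np_def by simp
    have s: "\<bar>snd (dir w x)\<bar> = \<rho> * \<bar>fst (dir w x)\<bar>" using sl f0 by (simp add: field_simps)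
    have u: "(fst (dir w x))^2 + (snd (dir w x))^2 = 1" by (rule dir_unit)
    have h: "\<bar>fst (dir w x)\<bar>^2 * (1 + \<rho>^2) = 1"
    proof -
      have "(snd (dir w x))^2 = \<bar>snd (dir w x)\<bar>^2" by simp
      also have "\<dots> = \<rho>^2 * \<bar>fst (dir w x)\<bar>^2" unfolding s by (simp add: power_mult_distrib)
      finally have "(fst (dir w x))^2 + \<rho>^2 * \<bar>fst (dir w x)\<bar>^2 = 1" using u by simp
      then show ?thesis by (simp add: algebra_simps)
    qed
    have c: "1 + \<rho>^2 \<noteq> 0" by (smt (verit) zero_le_power2)
    have "\<bar>fst (dir w x)\<bar>^2 = (\<bar>fst (dir w x)\<bar>^2 * (1 + \<rho>^2)) / (1 + \<rho>^2)" using c by simp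
    also have "\<dots> = 1 / (1 + \<rho>^2)" by (simp only: h)
    finally have "\<bar>fst (dir w x)\<bar>^2 = 1 / (1 + \<rho>^2)" .
    then have "\<bar>fst (dir w x)\<bar> = a" unfolding a_def by (metis abs_abs real_sqrt_abs)
    then show ?thesis using s by simp
  qed
  define AA where "AA = w / a"
  define g where "g = gcd p q"
  define N where "N = p div g"
  define M where "M = q div g"
  have g0: "g > 0" unfolding g_def using pq by simp
  have pN: "p = N * g" unfolding N_def g_def by simp
  have qM: "q = M * g" unfolding M_def g_def by simp
  have NM: "N > 0" "M > 0" using pN qM pq by (auto intro: ccontr)
  have cop: "coprime N M" unfolding N_def M_def g_def using pq by (intro div_gcd_coprime) auto
  define u where "u = AA / real N"
  have u0: "u > 0" unfolding u_def AA_def using w a0 NM by simp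
  have Aeq: "AA = real N * u" unfolding u_def using NM by simp
  have Beq: "1 / (\<rho> * a) = real M * u"
  proof -
    have "1 / (\<rho> * a) = real q * w / (real p * a)" unfolding \<rho>_def using pq w a0 by (simp add: field_simps)
    also have "\<dots> = real M * w / (real N * a)" unfolding pN qM using g0 by (simp add: field_simps)
    also have "\<dots> = real M * u" unfolding u_def AA_def using NM a0 by (simp add: field_simps)
    finally show ?thesis .
  qed
  define good where "good C z \<longleftrightarrow> (\<exists>x\<in>C. \<exists>j. z = orb w x (Suc j)) \<and> xi w z = AA \<and> 0 < eta w z \<and> eta w z < u
      \<and> side_of w (fst z) = (if fst (dir w z) < 0 then 1 else 3)" for C z
  define cls where "cls z = (if odd M \<and> odd N then (fst (dir w z) > 0 \<longleftrightarrow> snd (dir w z) > 0)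
      else if odd M then snd (dir w z) > 0 else fst (dir w z) > 0)" for z
  define F where "F C = cls (SOME z. good C z)" for C
  have exgood: "\<exists>z. good C z" if C: "C \<in> S" for C
  proof -
    have CC: "lam_stable_cyl w C" "\<not> is_pingpong_cyl w C" using C unfolding S_def by auto
    obtain x where x: "x \<in> C" using CC(1) unfolding lam_stable_cyl_def by blast
    have Sx: "periodic_pt w (billiard w) x" "np w x" using stable_np[OF w CC x] by auto
    have reg: "\<And>n. regular w (orb w x n)" using Sx(1) unfolding periodic_pt_def by blast
    have d: "\<bar>fst (dir w x)\<bar> = a" "\<bar>snd (dir w x)\<bar> = \<rho> * a" using dirfix[OF C x] by auto
    have A: "w / \<bar>fst (dir w x)\<bar> = real N * u" using Aeq d unfolding AA_def by simp
    have B: "1 / \<bar>snd (dir w x)\<bar> = real M * u" using Beq d by simp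
    obtain j where j: "xi w (orb w x (Suc j)) = w / \<bar>fst (dir w x)\<bar>" "0 < eta w (orb w x (Suc j))" "eta w (orb w x (Suc j)) < u"
      "side_of w (fst (orb w x (Suc j))) = (if fst (dir w (orb w x (Suc j))) < 0 then 1 else 3)"
      using normal_pt[OF w reg Sx(2) A B u0 NM cop] by blast
    show ?thesis unfolding good_def using x j d AA_def by (intro exI[of _ "orb w x (Suc j)"]) auto
  qed
  have gp: "periodic_pt w (billiard w) z \<and> (\<forall>n. regular w (orb w z n)) \<and> np w z \<and> \<bar>fst (dir w z)\<bar> = a
      \<and> \<bar>snd (dir w z)\<bar> = \<rho> * a \<and> cyl w z = C" if C: "C \<in> S" and gz: "good C z" for C z
  proof -
    have CC: "lam_stable_cyl w C" "\<not> is_pingpong_cyl w C" using C unfolding S_def by auto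
    obtain x j where x: "x \<in> C" "z = orb w x (Suc j)" using gz unfolding good_def by blast
    have Sx: "periodic_pt w (billiard w) x" "np w x" "cyl w x = C" using stable_np[OF w CC x(1)] by auto
    have reg: "\<And>n. regular w (orb w x n)" using Sx(1) unfolding periodic_pt_def by blast
    have pz: "periodic_pt w (billiard w) z" unfolding x(2) by (rule periodic_orb[OF Sx(1)])
    have regz: "\<forall>n. regular w (orb w z n)" using pz unfolding periodic_pt_def by blast
    have npz: "np w z" unfolding x(2) by (rule orbit_np[OF w reg Sx(2)])
    have dz: "\<bar>fst (dir w z)\<bar> = a \<and> \<bar>snd (dir w z)\<bar> = \<rho> * a"
      using orbit_dir[OF w reg Sx(2), of "Suc j"] dirfix[OF C x(1)] x(2) by simp
    have "cyl w z = cyl w x"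
      by (rule cyl_eq[OF pz Sx(1), of 0 "Suc j"]) (use x(2) in simp)
    then show ?thesis using pz regz npz dz Sx(3) by simp
  qed
  have inj: "inj_on F S"
  proof (rule inj_onI)
    fix C1 C2 assume C1: "C1 \<in> S" and C2: "C2 \<in> S" and FF: "F C1 = F C2"
    define z1 where "z1 = (SOME z. good C1 z)"
    define z2 where "z2 = (SOME z. good C2 z)"
    have g1: "good C1 z1" unfolding z1_def by (rule someI_ex[OF exgood[OF C1]])
    have g2: "good C2 z2" unfolding z2_def by (rule someI_ex[OF exgood[OF C2]])
    have cl: "cls z1 = cls z2" using FF unfolding F_def z1_def z2_def .
    note P1 = gp[OF C1 g1] and P2 = gp[OF C2 g2]
    have reg1: "\<And>n. regular w (orb w z1 n)" and reg2: "\<And>n. regular w (orb w z2 n)" using P1 P2 by auto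
    have np1: "np w z1" and np2: "np w z2" using P1 P2 by auto
    have n1: "fst (dir w z1) \<noteq> 0" "snd (dir w z1) \<noteq> 0" and n2: "fst (dir w z2) \<noteq> 0" "snd (dir w z2) \<noteq> 0"
      using np1 np2 unfolding np_def by auto
    have ad: "\<bar>fst (dir w z2)\<bar> = \<bar>fst (dir w z1)\<bar>" "\<bar>snd (dir w z2)\<bar> = \<bar>snd (dir w z1)\<bar>" using P1 P2 by auto
    have A1: "w / \<bar>fst (dir w z1)\<bar> = real N * u" using P1 Aeq unfolding AA_def by simp
    have B1: "1 / \<bar>snd (dir w z1)\<bar> = real M * u" using P1 Beq by simp
    have X1: "xi w z1 = w / \<bar>fst (dir w z1)\<bar>" using g1 P1 unfolding good_def AA_def by simp
    have X2: "xi w z2 = w / \<bar>fst (dir w z1)\<bar>" using g2 P1 unfolding good_def AA_def by simp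
    have Y1: "0 < eta w z1" "eta w z1 < u" and Y2: "0 < eta w z2" "eta w z2 < u" using g1 g2 unfolding good_def by auto
    have sd1: "side_of w (fst z1) = (if fst (dir w z1) < 0 then 1 else 3)" using g1 unfolding good_def by blast
    have sd2: "side_of w (fst z2) = (if fst (dir w z2) < 0 then 1 else 3)" using g2 unfolding good_def by blast
    have pz1: "periodic_pt w (billiard w) z1" and pz2: "periodic_pt w (billiard w) z2" using P1 P2 by auto
    have "cyl w z1 = cyl w z2"
    proof (cases "(fst (dir w z1) > 0 \<longleftrightarrow> fst (dir w z2) > 0) \<and> (snd (dir w z1) > 0 \<longleftrightarrow> snd (dir w z2) > 0)")
      case True
      have sd: "side_of w (fst z1) = side_of w (fst z2)" using sd1 sd2 True n1 n2 by auto
      have "itin w (billiard w) z1 = itin w (billiard w) z2"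
        using same_itin[OF w reg1 reg2 np1 np2 ad A1 B1 u0 X1 X2 Y1 Y2 _ _ sd] True by blast
      then show ?thesis by (intro cyl_eq[OF pz1 pz2, of 0 0]) simp
    next
      case False
      obtain j where j: "xi w (orb w z1 (Suc j)) = w / \<bar>fst (dir w z1)\<bar>" "eta w (orb w z1 (Suc j)) = eta w z1"
        "fst (dir w (orb w z1 (Suc j))) = (-1)^M * fst (dir w z1)" "snd (dir w (orb w z1 (Suc j))) = (-1)^N * snd (dir w z1)"
        "side_of w (fst (orb w z1 (Suc j))) = (if fst (dir w (orb w z1 (Suc j))) < 0 then 1 else 3)"
        using flip_pt[OF w reg1 np1 A1 B1 u0 NM X1 Y1] by blast
      define z1' where "z1' = orb w z1 (Suc j)"
      have pz1': "periodic_pt w (billiard w) z1'" unfolding z1'_def by (rule periodic_orb[OF pz1])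
      have reg1': "\<And>n. regular w (orb w z1' n)" using pz1' unfolding periodic_pt_def by blast
      have np1': "np w z1'" unfolding z1'_def by (rule orbit_np[OF w reg1 np1])
      have s1': "fst (dir w z1') > 0 \<longleftrightarrow> (if even M then fst (dir w z1) > 0 else \<not> fst (dir w z1) > 0)"
        unfolding z1'_def j(3) using n1 by (auto simp: zero_less_mult_iff)
      have t1': "snd (dir w z1') > 0 \<longleftrightarrow> (if even N then snd (dir w z1) > 0 else \<not> snd (dir w z1) > 0)"
        unfolding z1'_def j(4) using n1 by (auto simp: zero_less_mult_iff)
      have ne: "\<not> (even M \<and> even N)" using coprime_not_both_even[OF cop] by blast
      have bc: "(if even M then fst (dir w z1) > 0 else \<not> fst (dir w z1) > 0) = (fst (dir w z2) > 0)
          \<and> (if even N then snd (dir w z1) > 0 else \<not> snd (dir w z1) > 0) = (snd (dir w z2) > 0)"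
        using bool_cls[OF ne, of "fst (dir w z1) > 0" "snd (dir w z1) > 0" "fst (dir w z2) > 0" "snd (dir w z2) > 0"]
          cl False unfolding cls_def by blast
      have ss1: "fst (dir w z1') > 0 \<longleftrightarrow> fst (dir w z2) > 0" and ss2: "snd (dir w z1') > 0 \<longleftrightarrow> snd (dir w z2) > 0"
        using s1' t1' bc by auto
      have nz1': "fst (dir w z1') \<noteq> 0" using np1' unfolding np_def by auto
      have ad': "\<bar>fst (dir w z1')\<bar> = \<bar>fst (dir w z1)\<bar>" "\<bar>snd (dir w z1')\<bar> = \<bar>snd (dir w z1)\<bar>"
        unfolding z1'_def j(3) j(4) by (simp_all add: abs_mult)
      have A1': "w / \<bar>fst (dir w z1')\<bar> = real N * u" using A1 ad' by simp
      have B1': "1 / \<bar>snd (dir w z1')\<bar> = real M * u" using B1 ad' by simp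
      have X1': "xi w z1' = w / \<bar>fst (dir w z1')\<bar>" using j(1) ad' unfolding z1'_def by simp
      have X2': "xi w z2 = w / \<bar>fst (dir w z1')\<bar>" using X2 ad' by simp
      have Y1': "0 < eta w z1'" "eta w z1' < u" using j(2) Y1 unfolding z1'_def by auto
      have sd: "side_of w (fst z1') = side_of w (fst z2)"
        using j(5) sd2 ss1 nz1' n2 unfolding z1'_def[symmetric] by auto
      have ad2: "\<bar>fst (dir w z2)\<bar> = \<bar>fst (dir w z1')\<bar>" "\<bar>snd (dir w z2)\<bar> = \<bar>snd (dir w z1')\<bar>" using ad ad' by auto
      have "itin w (billiard w) z1' = itin w (billiard w) z2"
        by (rule same_itin[OF w reg1' reg2 np1' np2 ad2 A1' B1' u0 X1' X2' Y1' Y2 ss1 ss2 sd])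
      then show ?thesis by (intro cyl_eq[OF pz1 pz2, of "Suc j" 0]) (simp add: z1'_def)
    qed
    then show "C1 = C2" using P1 P2 by simp
  qed
  have fin: "finite S" by (rule finite_imageD[OF _ inj]) simp
  have "card S = card (F ` S)" using card_image[OF inj] by simp
  also have "\<dots> \<le> card (UNIV :: bool set)" by (rule card_mono) auto
  finally have "card S \<le> 2" by simp
  then show ?thesis using fin unfolding S_def by simp
qed


theorem proposition4p6:
  fixes w :: real
  assumes "w > 0"
  shows "card {C. is_pingpong_cyl w C} = 2
    \<and> (\<forall>C. is_pingpong_cyl w C \<longrightarrow> lam_stable_cyl w C)
    \<and> ((\<nexists>p q :: nat. p > 0 \<and> q > 0 \<and> w = real p / real q * cot (pi * real p / (2 * real (p + q))))
         \<longrightarrow> (\<forall>C. lam_stable_cyl w C \<longrightarrow> is_pingpong_cyl w C))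
    \<and> (\<forall>p q :: nat. p > 0 \<and> q > 0 \<and> w = real p / real q * cot (pi * real p / (2 * real (p + q)))
         \<longrightarrow> finite {C. lam_stable_cyl w C \<and> \<not> is_pingpong_cyl w C}
           \<and> card {C. lam_stable_cyl w C \<and> \<not> is_pingpong_cyl w C} \<le> 2
           \<and> (\<forall>C. lam_stable_cyl w C \<and> \<not> is_pingpong_cyl w C \<longrightarrow>
                 (\<forall>x\<in>C. slope w x \<in> {real p / (real q * w), - (real p / (real q * w))})))"
proof (intro conjI allI impI)
  show "card {C. is_pingpong_cyl w C} = 2" by (rule pp_card[OF assms])
next
  fix C assume "is_pingpong_cyl w C"
  then show "lam_stable_cyl w C" by (rule pp_stable[OF assms])
next
  fix C
  assume n: "\<nexists>p q :: nat. p > 0 \<and> q > 0 \<and> w = real p / real q * cot (pi * real p / (2 * real (p + q)))"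
    and C: "lam_stable_cyl w C"
  show "is_pingpong_cyl w C"
  proof (rule ccontr)
    assume "\<not> is_pingpong_cyl w C"
    then show False using partC[OF assms C] n by blast
  qed
next
  fix p q :: nat
  assume pq: "p > 0 \<and> q > 0 \<and> w = real p / real q * cot (pi * real p / (2 * real (p + q)))"
  then have pq': "p > 0" "q > 0" "w = real p / real q * cot (pi * real p / (2 * real (p + q)))" by auto
  note D = partD_count[OF assms pq']
  show "finite {C. lam_stable_cyl w C \<and> \<not> is_pingpong_cyl w C}" using D by blast
  show "card {C. lam_stable_cyl w C \<and> \<not> is_pingpong_cyl w C} \<le> 2" using D by blast
  fix C assume C: "lam_stable_cyl w C \<and> \<not> is_pingpong_cyl w C"
  show "\<forall>x\<in>C. slope w x \<in> {real p / (real q * w), - (real p / (real q * w))}"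
  proof
    fix x assume x: "x \<in> C"
    have "\<bar>snd (dir w x)\<bar> / \<bar>fst (dir w x)\<bar> = real p / (real q * w)"
      using partD_slope[OF assms _ _ x pq'] C by blast
    then have "\<bar>slope w x\<bar> = real p / (real q * w)" unfolding slope_def by (simp add: abs_divide)
    then show "slope w x \<in> {real p / (real q * w), - (real p / (real q * w))}" by (auto simp: abs_if split: if_splits)
  qed
qed

end
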